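(* Consider the splitting scheme, with constant $\gamma,\sigma\in\mathbb{R}^{3N\times3N}$, $\sigma\sigma^T=\frac2\beta\gamma$, time step $\Delta t$, and i.i.d. standard Gaussian vectors $\mathcal{G}^n,\mathcal{G}^{n+1/2}$: (1) $p^{n+1/4}=p^n-\frac{\Delta t}4\gamma M^{-1}(p^n+p^{n+1/4})+\sqrt{\frac{\Delta t}2}\sigma\mathcal{G}^n+\nabla\xi(q^n)\lambda^{n+1/4}$, $\nabla\xi(q^n)^TM^{-1}p^{n+1/4}=0$; (2) $p^{n+1/2}=p^{n+1/4}-\frac{\Delta t}2\nabla V(q^n)+\nabla\xi(q^n)\lambda^{n+1/2}$, $q^{n+1}=q^n+\Delta t M^{-1}p^{n+1/2}$, $\xi(q^{n+1})=z$, $p^{n+3/4}=p^{n+1/2}-\frac{\Delta t}2\nabla V(q^{n+1})+\nabla\xi(q^{n+1})\lambda^{n+3/4}$, $\nabla\xi(q^{n+1})^TM^{-1}p^{n+3/4}=0$; (3) $p^{n+1}=p^{n+3/4}-\frac{\Delta t}4\gamma M^{-1}(p^{n+3/4}+p^{n+1})+\sqrt{\frac{\Delta t}2}\sigma\mathcal{G}^{n+1/2}+\nabla\xi(q^{n+1})\lambda^{n+1}$, $\nabla\xi(q^{n+1})^TM^{-1}p^{n+1}=0$. Then, as $\Delta t\to0$, the Lagrange multipliers $\lambda^{n+1/2},\lambda^{n+3/4}$ of step (2) satisfy $$\lambda^{n+1/2}=f^M_{\rm rgd}(q^n,p^{n+1/2})\frac{\Delta t}2+\mathrm{O}(\Delta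 t^2),\qquad \lambda^{n+3/4}=f^M_{\rm rgd}(q^{n+1},p^{n+1/2})\frac{\Delta t}2+\mathrm{O}(\Delta t^2),$$ and moreover $$\lambda^{n+1/2}+\lambda^{n+3/4}=\frac{\Delta t}2\Big(f^M_{\rm rgd}(q^n,p^{n+1/2})+f^M_{\rm rgd}(q^{n+1},p^{n+1/2})\Big)+\mathrm{O}(\Delta t^3),$$ $$\lambda^{n+1/2}+\lambda^{n+3/4}=\frac{\Delta t}2\Big(f^M_{\rm rgd}(q^n,p^{n+1/4})+f^M_{\rm rgd}(q^{n+1},p^{n+3/4})\Big)+\mathrm{O}(\Delta t^3).$$
   Context: $q,p\in\mathbb{R}^{3N}$; $M$ constant symmetric positive definite; $V$ smooth; $\beta>0$. $\xi=(\xi_1,\dots,\xi_m)^T$ smooth, $\nabla\xi\in\mathbb{R}^{3N\times m}$, $G_M=\nabla\xi^TM^{-1}\nabla\xi$ invertible on $\{\xi=z\}$; the $\lambda$'s in $\mathbb{R}^m$ are the Lagrange multipliers enforcing the indicated constraints. $f^M_{\rm rgd}(q,p)=G_M^{-1}(q)\nabla\xi(q)^TM^{-1}\nabla V(q)-G_M^{-1}(q)\mathrm{Hess}_q(\xi)(M^{-1}p,M^{-1}p)$, where $\mathrm{Hess}_q(\xi)(v_1,v_2)\in\mathbb{R}^m$ has components $v_1^T\nabla^2\xi_i(q)v_2$. *)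

theory Defs
  imports "HOL-Analysis.Analysis"
begin

coinductive smooth_map :: "('a::real_normed_vector \<Rightarrow> 'b::real_normed_vector) \<Rightarrow> bool" where
  "(\<forall>x. f differentiable (at x)) \<Longrightarrow> (\<forall>v. smooth_map (\<lambda>x. frechet_derivative f (at x) v))
     \<Longrightarrow> smooth_map f"

definition grad_xi :: "(real^'n \<Rightarrow> real^'m) \<Rightarrow> real^'n \<Rightarrow> real^'m^'n" where
  "grad_xi \<xi> q = transpose (jacobian \<xi> (at q))"

definition grad_V :: "(real^'n \<Rightarrow> real) \<Rightarrow> real^'n \<Rightarrow> real^'n" where
  "grad_V V q = (\<chi> j. frechet_derivative V (at q) (axis j 1))"

definition G_M :: "real^'n^'n \<Rightarrow> (real^'n \<Rightarrow> real^'m) \<Rightarrow> real^'n \<Rightarrow> real^'m^'m" where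
  "G_M M \<xi> q = transpose (grad_xi \<xi> q) ** matrix_inv M ** grad_xi \<xi> q"

text \<open>Hess_q(xi)(v1,v2), the vector with components v1^T (nabla^2 xi_i)(q) v2\<close>
definition hess_xi :: "(real^'n \<Rightarrow> real^'m) \<Rightarrow> real^'n \<Rightarrow> real^'n \<Rightarrow> real^'n \<Rightarrow> real^'m" where
  "hess_xi \<xi> q v1 v2 = frechet_derivative (\<lambda>x. jacobian \<xi> (at x) *v v2) (at q) v1"

definition f_rgd :: "real^'n^'n \<Rightarrow> (real^'n \<Rightarrow> real^'m) \<Rightarrow> (real^'n \<Rightarrow> real)
    \<Rightarrow> real^'n \<Rightarrow> real^'n \<Rightarrow> real^'m" where
  "f_rgd M \<xi> V q p =
     matrix_inv (G_M M \<xi> q) *v (transpose (grad_xi \<xi> q) *v (matrix_inv M *v grad_V V q))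
   - matrix_inv (G_M M \<xi> q) *v hess_xi \<xi> q (matrix_inv M *v p) (matrix_inv M *v p)"

end

theory Submission
  imports Defs
begin

lemma smooth_diff: "smooth_map f \<Longrightarrow> f differentiable (at x)"
  by (erule smooth_map.cases) auto

lemma smooth_fd: "smooth_map f \<Longrightarrow> smooth_map (\<lambda>x. frechet_derivative f (at x) v)"
  by (erule smooth_map.cases) auto

lemma smooth_hasd: "smooth_map f \<Longrightarrow> (f has_derivative frechet_derivative f (at x)) (at x)"
  using smooth_diff[of f x] frechet_derivative_works[of f "at x"] by simp

lemma smooth_lin: "smooth_map f \<Longrightarrow> linear (frechet_derivative f (at x))"
  using smooth_hasd[of f x] by (rule has_derivative_linear)

lemma smooth_cont: "smooth_map f \<Longrightarrow> continuous_on S f"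
  by (intro continuous_at_imp_continuous_on ballI differentiable_imp_continuous_within smooth_diff)

fun Dl :: "'a::real_normed_vector list \<Rightarrow> ('a \<Rightarrow> 'b::real_normed_vector) \<Rightarrow> 'a \<Rightarrow> 'b" where
  "Dl [] f = f"
| "Dl (w#ws) f = Dl ws (\<lambda>y. frechet_derivative f (at y) w)"

lemma smooth_Dl: "smooth_map f \<Longrightarrow> smooth_map (Dl ws f)"
proof (induction ws arbitrary: f)
  case (Cons w ws)
  show ?case using Cons.IH[OF smooth_fd[OF Cons.prems]] by simp
qed simp

lemma Dl_append: "Dl (ws1 @ ws2) f = Dl ws2 (Dl ws1 f)"
  by (induction ws1 arbitrary: f) auto

lemma Dl_snoc: "Dl (ws @ [w]) f = (\<lambda>y. frechet_derivative (Dl ws f) (at y) w)"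
  by (simp add: Dl_append)

lemma fd_sum:
  assumes "finite I" "\<And>i. i \<in> I \<Longrightarrow> smooth_map (f i)"
  shows "frechet_derivative (\<lambda>y. \<Sum>i\<in>I. c i *\<^sub>R f i y) (at x) = (\<lambda>v. \<Sum>i\<in>I. c i *\<^sub>R frechet_derivative (f i) (at x) v)"
proof -
  have "((\<lambda>y. \<Sum>i\<in>I. c i *\<^sub>R f i y) has_derivative (\<lambda>v. \<Sum>i\<in>I. c i *\<^sub>R frechet_derivative (f i) (at x) v)) (at x)"
    apply (rule has_derivative_sum)
    apply (rule has_derivative_scaleR_right)
    apply (rule smooth_hasd)
    apply (erule assms(2))
    done
  then show ?thesis by (rule frechet_derivative_at[symmetric])
qed

lemma Dl_sum:
  assumes "finite I" "\<And>i. i \<in> I \<Longrightarrow> smooth_map (f i)"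
  shows "Dl ws (\<lambda>y. \<Sum>i\<in>I. c i *\<^sub>R f i y) = (\<lambda>y. \<Sum>i\<in>I. c i *\<^sub>R Dl ws (f i) y)"
  using assms(2)
proof (induction ws arbitrary: f)
  case Nil
  then show ?case by simp
next
  case (Cons w ws)
  have "Dl (w#ws) (\<lambda>y. \<Sum>i\<in>I. c i *\<^sub>R f i y) = Dl ws (\<lambda>y. \<Sum>i\<in>I. c i *\<^sub>R frechet_derivative (f i) (at y) w)"
    using fd_sum[OF assms(1) Cons.prems] by simp
  also have "\<dots> = (\<lambda>y. \<Sum>i\<in>I. c i *\<^sub>R Dl ws (\<lambda>y. frechet_derivative (f i) (at y) w) y)"
    by (rule Cons.IH) (rule smooth_fd, rule Cons.prems)
  finally show ?case by simp
qed

lemma lin_expand: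
  fixes L :: "'a::euclidean_space \<Rightarrow> 'b::real_normed_vector"
  assumes "linear L"
  shows "L w = (\<Sum>b\<in>Basis. (w \<bullet> b) *\<^sub>R L b)"
proof -
  interpret linear L by fact
  have "L w = L (\<Sum>b\<in>Basis. (w \<bullet> b) *\<^sub>R b)" by (simp add: euclidean_representation)
  also have "\<dots> = (\<Sum>b\<in>Basis. (w \<bullet> b) *\<^sub>R L b)" by (simp add: sum scale)
  finally show ?thesis .
qed

lemma Dl_first:
  fixes f :: "'a::euclidean_space \<Rightarrow> 'b::real_normed_vector"
  assumes "smooth_map f"
  shows "Dl (w#ws) f y = (\<Sum>b\<in>Basis. (w \<bullet> b) *\<^sub>R Dl (b#ws) f y)"
proof -
  have "(\<lambda>y. frechet_derivative f (at y) w) = (\<lambda>y. \<Sum>b\<in>Basis. (w \<bullet> b) *\<^sub>R frechet_derivative f (at y) b)"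
    by (rule ext, rule lin_expand, rule smooth_lin[OF assms])
  then have "Dl (w#ws) f = Dl ws (\<lambda>y. \<Sum>b\<in>Basis. (w \<bullet> b) *\<^sub>R frechet_derivative f (at y) b)"
    by simp
  also have "\<dots> = (\<lambda>y. \<Sum>b\<in>Basis. (w \<bullet> b) *\<^sub>R Dl ws (\<lambda>y. frechet_derivative f (at y) b) y)"
    by (rule Dl_sum) (auto intro!: smooth_fd[OF assms])
  finally show ?thesis by simp
qed

lemma smooth_bounded:
  fixes f :: "'a::euclidean_space \<Rightarrow> 'b::real_normed_vector"
  assumes "smooth_map f" "compact K"
  shows "\<exists>C\<ge>0. \<forall>y\<in>K. norm (f y) \<le> C"
proof -
  have "compact (f ` K)" by (rule compact_continuous_image[OF smooth_cont[OF assms(1)] assms(2)])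
  then have "bounded (f ` K)" by (rule compact_imp_bounded)
  then obtain B where "\<forall>x\<in>f ` K. norm x \<le> B" by (auto simp: bounded_iff)
  then show ?thesis by (intro exI[of _ "max B 0"]) auto
qed

lemma Dl_bound:
  fixes f :: "'a::euclidean_space \<Rightarrow> 'b::real_normed_vector"
  assumes "smooth_map f" "compact K"
  shows "\<exists>C\<ge>0. \<forall>y\<in>K. \<forall>ws. length ws = n \<longrightarrow> norm (Dl ws f y) \<le> C * prod_list (map norm ws)"
  using assms(1)
proof (induction n arbitrary: f)
  case 0
  then show ?case using smooth_bounded[OF 0 assms(2)] by auto
next
  case (Suc n)
  have "\<forall>b\<in>Basis. \<exists>C\<ge>0. \<forall>y\<in>K. \<forall>ws. length ws = n \<longrightarrow>
      norm (Dl ws (\<lambda>y. frechet_derivative f (at y) b) y) \<le> C * prod_list (map norm ws)"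
    using Suc.IH[OF smooth_fd[OF Suc.prems]] by blast
  then obtain Cf where Cf: "\<And>b. b \<in> Basis \<Longrightarrow> Cf b \<ge> 0 \<and> (\<forall>y\<in>K. \<forall>ws. length ws = n \<longrightarrow>
      norm (Dl ws (\<lambda>y. frechet_derivative f (at y) b) y) \<le> Cf b * prod_list (map norm ws))"
    by metis
  show ?case
  proof (intro exI[of _ "\<Sum>b\<in>Basis. Cf b"] conjI ballI allI impI)
    show "0 \<le> (\<Sum>b\<in>Basis. Cf b)" using Cf by (simp add: sum_nonneg)
    fix y ws assume y: "y \<in> K" and l: "length (ws::'a list) = Suc n"
    then obtain w ws' where ws: "ws = w # ws'" and l': "length ws' = n" by (cases ws) auto
    have "norm (Dl ws f y) = norm (\<Sum>b\<in>Basis. (w \<bullet> b) *\<^sub>R Dl (b#ws') f y)"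
      unfolding ws by (rule arg_cong[where f=norm], rule Dl_first[OF Suc.prems])
    also have "\<dots> \<le> (\<Sum>b\<in>Basis. norm ((w \<bullet> b) *\<^sub>R Dl (b#ws') f y))" by (rule norm_sum)
    also have "\<dots> \<le> (\<Sum>b\<in>Basis. norm w * (Cf b * prod_list (map norm ws')))"
    proof (rule sum_mono)
      fix b :: 'a assume b: "b \<in> Basis"
      have "norm ((w \<bullet> b) *\<^sub>R Dl (b#ws') f y) = \<bar>w \<bullet> b\<bar> * norm (Dl ws' (\<lambda>y. frechet_derivative f (at y) b) y)"
        by simp
      also have "\<dots> \<le> norm w * (Cf b * prod_list (map norm ws'))"
        by (rule mult_mono) (use Cf[OF b] y l' Basis_le_norm[OF b] in auto)
      finally show "norm ((w \<bullet> b) *\<^sub>R Dl (b#ws') f y) \<le> norm w * (Cf b * prod_list (map norm ws'))" .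
    qed
    also have "\<dots> = (\<Sum>b\<in>Basis. Cf b) * prod_list (map norm ws)"
      by (simp add: ws sum_distrib_left sum_distrib_right mult_ac)
    finally show "norm (Dl ws f y) \<le> (\<Sum>b\<in>Basis. Cf b) * prod_list (map norm ws)" .
  qed
qed

lemma line_deriv:
  fixes g :: "'a::euclidean_space \<Rightarrow> 'b::euclidean_space"
  assumes "smooth_map g"
  shows "((\<lambda>s. g (x + s *\<^sub>R d) \<bullet> b) has_field_derivative (frechet_derivative g (at (x + s *\<^sub>R d)) d \<bullet> b)) (at s)"
proof -
  have l: "((\<lambda>s. x + s *\<^sub>R d) has_derivative (\<lambda>t. t *\<^sub>R d)) (at s)"
    by (auto intro!: derivative_eq_intros)
  have "((g \<circ> (\<lambda>s. x + s *\<^sub>R d)) has_derivative (frechet_derivative g (at (x + s *\<^sub>R d)) \<circ> (\<lambda>t. t *\<^sub>R d))) (at s)"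
    by (rule diff_chain_at[OF l smooth_hasd[OF assms]])
  then have "((\<lambda>s. (g \<circ> (\<lambda>s. x + s *\<^sub>R d)) s \<bullet> b) has_derivative (\<lambda>t. (frechet_derivative g (at (x + s *\<^sub>R d)) \<circ> (\<lambda>t. t *\<^sub>R d)) t \<bullet> b)) (at s)"
    by (rule bounded_linear.has_derivative[OF bounded_linear_inner_left])
  then have H: "((\<lambda>s. g (x + s *\<^sub>R d) \<bullet> b) has_derivative (\<lambda>t. frechet_derivative g (at (x + s *\<^sub>R d)) (t *\<^sub>R d) \<bullet> b)) (at s)"
    by (simp add: o_def)
  show ?thesis
    by (rule has_derivative_imp_has_field_derivative[OF H]) (simp add: linear_cmul[OF smooth_lin[OF assms]])
qed

lemma Dl_rep_Suc: "Dl (replicate (Suc m) d) f = (\<lambda>y. frechet_derivative (Dl (replicate m d) f) (at y) d)"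
proof -
  have "replicate (Suc m) d = replicate m d @ [d]" by (induction m) auto
  then show ?thesis by (simp only: Dl_snoc)
qed

lemma taylor:
  fixes f :: "'a::euclidean_space \<Rightarrow> 'b::euclidean_space"
  assumes f: "smooth_map f" and n: "0 < n"
    and B: "\<And>s. 0 \<le> s \<Longrightarrow> s \<le> 1 \<Longrightarrow> norm (Dl (replicate n d) f (x + s *\<^sub>R d)) \<le> B"
  shows "norm (f (x + d) - (\<Sum>j<n. (1 / fact j) *\<^sub>R Dl (replicate j d) f x)) \<le> real DIM('b) * B / fact n"
proof -
  let ?E = "f (x + d) - (\<Sum>j<n. (1 / fact j) *\<^sub>R Dl (replicate j d) f x)"
  have comp: "\<bar>?E \<bullet> b\<bar> \<le> B / fact n" if b: "b \<in> Basis" for b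
  proof -
    define diff where "diff m s = Dl (replicate m d) f (x + s *\<^sub>R d) \<bullet> b" for m s
    have "\<forall>m t. m < n \<and> 0 \<le> t \<and> t \<le> 1 \<longrightarrow> DERIV (diff m) t :> diff (Suc m) t"
    proof (intro allI impI)
      fix m t
      show "DERIV (diff m) t :> diff (Suc m) t"
        unfolding diff_def Dl_rep_Suc
        by (rule line_deriv[OF smooth_Dl[OF f]])
    qed
    from Maclaurin[OF zero_less_one n refl this]
    obtain t where t: "0 < t" "t < 1"
      and eq: "diff 0 1 = (\<Sum>m<n. diff m 0 / fact m * 1 ^ m) + diff n t / fact n * 1 ^ n"
      by blast
    have "?E \<bullet> b = diff 0 1 - (\<Sum>m<n. diff m 0 / fact m)"
      by (simp add: diff_def inner_diff_left inner_sum_left divide_inverse mult.commute)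
    also have "\<dots> = diff n t / fact n" using eq by simp
    finally have "\<bar>?E \<bullet> b\<bar> = \<bar>diff n t\<bar> / fact n" by simp
    also have "\<dots> \<le> B / fact n"
    proof (rule divide_right_mono)
      have "\<bar>diff n t\<bar> \<le> norm (Dl (replicate n d) f (x + t *\<^sub>R d))"
        unfolding diff_def by (rule Basis_le_norm[OF b])
      also have "\<dots> \<le> B" using B t by simp
      finally show "\<bar>diff n t\<bar> \<le> B" .
    qed simp
    finally show ?thesis .
  qed
  have "norm ?E \<le> (\<Sum>b\<in>(Basis::'b set). \<bar>?E \<bullet> b\<bar>)" by (rule norm_le_l1)
  also have "\<dots> \<le> (\<Sum>b\<in>(Basis::'b set). B / fact n)" by (rule sum_mono, rule comp)
  also have "\<dots> = real DIM('b) * B / fact n" by simp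
  finally show ?thesis .
qed

lemma taylorK:
  fixes g :: "'a::euclidean_space \<Rightarrow> 'b::euclidean_space"
  assumes g: "smooth_map g" and n: "0 < n" and K: "convex K" "x \<in> K" "x + d \<in> K"
    and B: "\<And>y. y \<in> K \<Longrightarrow> norm (Dl (replicate n d) g y) \<le> B"
  shows "norm (g (x + d) - (\<Sum>j<n. (1 / fact j) *\<^sub>R Dl (replicate j d) g x)) \<le> real DIM('b) * B / fact n"
proof (rule taylor[OF g n])
  fix s :: real assume s: "0 \<le> s" "s \<le> 1"
  have "x + s *\<^sub>R d = (1 - s) *\<^sub>R x + s *\<^sub>R (x + d)" by (simp add: algebra_simps)
  also have "\<dots> \<in> K" using K s by (intro convexD) auto
  finally show "norm (Dl (replicate n d) g (x + s *\<^sub>R d)) \<le> B" by (rule B)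
qed

lemma Dl_lin2:
  assumes "smooth_map f" "smooth_map g"
  shows "Dl ws (\<lambda>y. a *\<^sub>R f y + b *\<^sub>R g y) = (\<lambda>y. a *\<^sub>R Dl ws f y + b *\<^sub>R Dl ws g y)"
  using assms
proof (induction ws arbitrary: f g)
  case Nil
  then show ?case by simp
next
  case (Cons w ws)
  have "((\<lambda>y. a *\<^sub>R f y + b *\<^sub>R g y) has_derivative
      (\<lambda>v. a *\<^sub>R frechet_derivative f (at x) v + b *\<^sub>R frechet_derivative g (at x) v)) (at x)" for x
    apply (rule has_derivative_add)
     apply (rule has_derivative_scaleR_right, rule smooth_hasd, rule Cons.prems(1))
    apply (rule has_derivative_scaleR_right, rule smooth_hasd, rule Cons.prems(2))
    done
  note fa = frechet_derivative_at[OF this]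
  have "(\<lambda>y. frechet_derivative (\<lambda>y. a *\<^sub>R f y + b *\<^sub>R g y) (at y) w) =
     (\<lambda>y. a *\<^sub>R frechet_derivative f (at y) w + b *\<^sub>R frechet_derivative g (at y) w)"
  proof
    fix y show "frechet_derivative (\<lambda>y. a *\<^sub>R f y + b *\<^sub>R g y) (at y) w = a *\<^sub>R frechet_derivative f (at y) w + b *\<^sub>R frechet_derivative g (at y) w"
      using fun_cong[OF fa[of y, symmetric], of w] by simp
  qed
  then have "Dl (w#ws) (\<lambda>y. a *\<^sub>R f y + b *\<^sub>R g y) =
     Dl ws (\<lambda>y. a *\<^sub>R frechet_derivative f (at y) w + b *\<^sub>R frechet_derivative g (at y) w)"
    by simp
  also have "\<dots> = (\<lambda>y. a *\<^sub>R Dl ws (\<lambda>y. frechet_derivative f (at y) w) y + b *\<^sub>R Dl ws (\<lambda>y. frechet_derivative g (at y) w) y)"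
    by (rule Cons.IH) (rule smooth_fd, rule Cons.prems)+
  finally show ?case by simp
qed

lemma Dl_head_lin:
  assumes "smooth_map f"
  shows "Dl ((a *\<^sub>R v + b *\<^sub>R w) # ws) f y = a *\<^sub>R Dl (v#ws) f y + b *\<^sub>R Dl (w#ws) f y"
proof -
  have "(\<lambda>y. frechet_derivative f (at y) (a *\<^sub>R v + b *\<^sub>R w)) =
        (\<lambda>y. a *\<^sub>R frechet_derivative f (at y) v + b *\<^sub>R frechet_derivative f (at y) w)"
    using smooth_lin[OF assms] by (simp add: linear_add linear_cmul)
  then have "Dl ((a *\<^sub>R v + b *\<^sub>R w) # ws) f = Dl ws (\<lambda>y. a *\<^sub>R frechet_derivative f (at y) v + b *\<^sub>R frechet_derivative f (at y) w)"
    by simp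
  also have "\<dots> = (\<lambda>y. a *\<^sub>R Dl (v#ws) f y + b *\<^sub>R Dl (w#ws) f y)"
    by (simp add: Dl_lin2 smooth_fd[OF assms])
  finally show ?thesis by simp
qed

lemma Dl_last_lin:
  assumes "smooth_map f"
  shows "Dl (ws @ [a *\<^sub>R v + b *\<^sub>R w]) f y = a *\<^sub>R Dl (ws @ [v]) f y + b *\<^sub>R Dl (ws @ [w]) f y"
  using smooth_lin[OF smooth_Dl[OF assms, of ws]] by (simp add: Dl_snoc linear_add linear_cmul)

lemma Dl_1_scale: "smooth_map f \<Longrightarrow> Dl [c *\<^sub>R v] f y = c *\<^sub>R Dl [v] f y"
  using Dl_last_lin[of f "[]" c v 0 0] by simp

lemma Dl_2_scale: "smooth_map f \<Longrightarrow> Dl [c *\<^sub>R v, c *\<^sub>R v] f y = (c^2) *\<^sub>R Dl [v, v] f y"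
  using Dl_last_lin[of f "[c *\<^sub>R v]" c v 0 0] Dl_head_lin[of f c v 0 0 "[v]" y]
  by (simp add: power2_eq_square)

lemma Dl_2_add1: "smooth_map f \<Longrightarrow> Dl [v + v', w] f y = Dl [v, w] f y + Dl [v', w] f y"
  using Dl_head_lin[of f 1 v 1 v' "[w]" y] by simp

lemma Dl_2_add2: "smooth_map f \<Longrightarrow> Dl [v, w + w'] f y = Dl [v, w] f y + Dl [v, w'] f y"
  using Dl_last_lin[of f "[v]" 1 w 1 w' y] by simp

lemma Dl_2_diff1: "smooth_map f \<Longrightarrow> Dl [v - v', w] f y = Dl [v, w] f y - Dl [v', w] f y"
  using Dl_head_lin[of f 1 v "-1" v' "[w]" y] by simp

lemma Dl_2_diff2: "smooth_map f \<Longrightarrow> Dl [v, w - w'] f y = Dl [v, w] f y - Dl [v, w'] f y"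
  using Dl_last_lin[of f "[v]" 1 w "-1" w' y] by simp

lemma taylor_gen:
  fixes f :: "'a::euclidean_space \<Rightarrow> 'b::euclidean_space"
  assumes f: "smooth_map f" and n: "0 < n" and K: "convex K" "x \<in> K" "x + d \<in> K"
    and C: "\<forall>y\<in>K. \<forall>ws. length ws = k + n \<longrightarrow> norm (Dl ws f y) \<le> C * prod_list (map norm ws)"
  shows "norm (Dl (replicate k d) f (x + d) - (\<Sum>j<n. (1 / fact j) *\<^sub>R Dl (replicate (k + j) d) f x))
     \<le> real DIM('b) * (C * norm d ^ (k + n)) / fact n"
proof -
  have e: "Dl (replicate j d) (Dl (replicate k d) f) = Dl (replicate (k + j) d) f" for j
    by (simp add: Dl_append[symmetric] replicate_add)
  have "norm (Dl (replicate k d) f (x + d) - (\<Sum>j<n. (1 / fact j) *\<^sub>R Dl (replicate j d) (Dl (replicate k d) f) x))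
     \<le> real DIM('b) * (C * norm d ^ (k + n)) / fact n"
  proof (rule taylorK[OF smooth_Dl[OF f] n K])
    fix y assume "y \<in> K"
    then show "norm (Dl (replicate n d) (Dl (replicate k d) f) y) \<le> C * norm d ^ (k + n)"
      using C[rule_format, of y "replicate (k+n) d"] by (simp add: e prod_list_replicate)
  qed
  then show ?thesis by (simp add: e)
qed

lemma jac_Dl:
  fixes f :: "real^'a \<Rightarrow> real^'b"
  assumes "smooth_map f"
  shows "jacobian f (at y) *v v = Dl [v] f y"
proof -
  have "(f has_derivative (\<lambda>h. jacobian f (at y) *v h)) (at y)"
    using smooth_diff[OF assms, of y] by (simp only: jacobian_works)
  from frechet_derivative_at[OF this] show ?thesis by simp
qed

lemma jac_entry: "jacobian f (at y) $ i $ j = Dl [axis j 1] f y $ i"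
  by (simp add: jacobian_def matrix_def)

lemma hess_Dl:
  fixes \<xi> :: "real^'a \<Rightarrow> real^'b"
  assumes "smooth_map \<xi>"
  shows "hess_xi \<xi> y v w = Dl [w, v] \<xi> y"
proof -
  have "(\<lambda>x. jacobian \<xi> (at x) *v w) = (\<lambda>x. frechet_derivative \<xi> (at x) w)"
    using jac_Dl[OF assms] by simp
  then show ?thesis by (simp add: hess_xi_def)
qed

lemma gV_entry: "grad_V V y $ j = Dl [axis j 1] V y"
  by (simp add: grad_V_def)

definition mn :: "real^'n^'m \<Rightarrow> real" where "mn A = (\<Sum>i\<in>UNIV. \<Sum>j\<in>UNIV. \<bar>A$i$j\<bar>)"

lemma mn_nonneg: "0 \<le> mn A"
  by (simp add: mn_def sum_nonneg)

lemma mn_mv: "norm (A *v x) \<le> mn A * norm x"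
proof -
  have "norm (A *v x) \<le> (\<Sum>i\<in>UNIV. \<bar>(A *v x) $ i\<bar>)"
    by (rule norm_le_l1_cart)
  also have "\<dots> \<le> (\<Sum>i\<in>UNIV. \<Sum>j\<in>UNIV. \<bar>A $ i $ j\<bar> * norm x)"
  proof (rule sum_mono)
    fix i
    have "\<bar>(A *v x) $ i\<bar> \<le> \<bar>\<Sum>j\<in>UNIV. A $ i $ j * x $ j\<bar>"
      by (simp add: matrix_vector_mult_def)
    also have "\<dots> \<le> (\<Sum>j\<in>UNIV. \<bar>A $ i $ j * x $ j\<bar>)"
      by (rule sum_abs)
    also have "\<dots> \<le> (\<Sum>j\<in>UNIV. \<bar>A $ i $ j\<bar> * norm x)"
      by (rule sum_mono) (simp add: abs_mult component_le_norm_cart mult_left_mono)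
    finally show "\<bar>(A *v x) $ i\<bar> \<le> (\<Sum>j\<in>UNIV. \<bar>A $ i $ j\<bar> * norm x)" .
  qed
  finally show ?thesis
    by (simp add: sum_distrib_right mn_def)
qed

lemma mn_transpose: "mn (transpose A) = mn A"
proof -
  have "mn (transpose A) = (\<Sum>i\<in>UNIV. \<Sum>j\<in>UNIV. \<bar>A$j$i\<bar>)"
    by (simp add: mn_def transpose_def)
  also have "\<dots> = mn A" unfolding mn_def by (rule sum.swap)
  finally show ?thesis .
qed

lemma mn_entry_bound:
  assumes "\<And>i j. \<bar>A$i$j\<bar> \<le> B"
  shows "mn (A::real^'n^'m) \<le> real CARD('m) * real CARD('n) * B"
proof -
  have "mn A \<le> (\<Sum>i\<in>(UNIV::'m set). \<Sum>j\<in>(UNIV::'n set). B)"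
    unfolding mn_def by (intro sum_mono assms)
  then show ?thesis by simp
qed

lemma inv_props:
  assumes "invertible A"
  shows "A *v (matrix_inv A *v x) = x" "matrix_inv A *v (A *v x) = x"
proof -
  have "A ** matrix_inv A = mat 1 \<and> matrix_inv A ** A = mat 1"
    using assms unfolding invertible_def matrix_inv_def by (rule someI_ex)
  then show "A *v (matrix_inv A *v x) = x" "matrix_inv A *v (A *v x) = x"
    by (simp_all add: matrix_vector_mul_assoc)
qed

lemma mn_vm: "norm (x v* A) \<le> mn A * norm x"
  using mn_mv[of "transpose A" x] by (simp add: mn_transpose)

lemma absorb:
  fixes x A B :: real
  assumes "x \<le> A + B * x" "B \<le> 1/2" "0 \<le> x"
  shows "x \<le> 2 * A"
proof -
  have "B * x \<le> 1/2 * x" using assms(2,3) by (rule mult_right_mono)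
  then show ?thesis using assms(1) by linarith
qed

lemma lip_Dl:
  fixes f :: "'a::euclidean_space \<Rightarrow> 'b::euclidean_space"
  assumes f: "smooth_map f" and K: "compact K" "convex K"
  shows "\<exists>L\<ge>0. \<forall>ws y y'. length ws = k \<longrightarrow> y \<in> K \<longrightarrow> y' \<in> K \<longrightarrow>
     norm (Dl ws f y' - Dl ws f y) \<le> L * prod_list (map norm ws) * norm (y' - y)"
proof -
  obtain C where C: "C \<ge> 0" "\<forall>y\<in>K. \<forall>ws. length ws = Suc k \<longrightarrow> norm (Dl ws f y) \<le> C * prod_list (map norm ws)"
    using Dl_bound[OF f K(1), of "Suc k"] by blast
  show ?thesis
  proof (intro exI[of _ "real DIM('b) * C"] conjI allI impI)
    show "0 \<le> real DIM('b) * C" using C by simp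
    fix ws :: "'a list" and y y' assume l: "length ws = k" and y: "y \<in> K" "y' \<in> K"
    let ?d = "y' - y"
    have "norm (Dl ws f (y + ?d) - (\<Sum>j<1. (1 / fact j) *\<^sub>R Dl (replicate j ?d) (Dl ws f) y))
       \<le> real DIM('b) * (C * prod_list (map norm ws) * norm ?d) / fact 1"
    proof (rule taylorK[OF smooth_Dl[OF f] _ K(2) y(1)])
      show "y + ?d \<in> K" using y by simp
      fix z assume z: "z \<in> K"
      have "Dl (replicate 1 ?d) (Dl ws f) z = Dl (ws @ [?d]) f z" by (simp add: Dl_append)
      also have "norm \<dots> \<le> C * prod_list (map norm (ws @ [?d]))"
        using C(2)[rule_format, OF z, of "ws @ [?d]"] l by simp
      finally show "norm (Dl (replicate 1 ?d) (Dl ws f) z) \<le> C * prod_list (map norm ws) * norm ?d"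
        by simp
    qed simp
    then show "norm (Dl ws f y' - Dl ws f y) \<le> real DIM('b) * C * prod_list (map norm ws) * norm (y' - y)"
      by (simp add: mult_ac)
  qed
qed

lemma jac_bounds:
  fixes \<xi> :: "real^'n \<Rightarrow> real^'m"
  assumes f: "smooth_map \<xi>" and K: "compact K" "convex K"
  shows "\<exists>BJ LJ. 0 \<le> BJ \<and> 0 \<le> LJ \<and> (\<forall>y\<in>K. mn (jacobian \<xi> (at y)) \<le> BJ)
     \<and> (\<forall>y\<in>K. \<forall>y'\<in>K. mn (jacobian \<xi> (at y') - jacobian \<xi> (at y)) \<le> LJ * norm (y' - y))"
proof -
  obtain C where C: "C \<ge> 0" "\<forall>y\<in>K. \<forall>ws. length ws = 1 \<longrightarrow> norm (Dl ws \<xi> y) \<le> C * prod_list (map norm ws)"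
    using Dl_bound[OF f K(1), of 1] by blast
  obtain L where L: "L \<ge> 0" "\<forall>ws y y'. length ws = 1 \<longrightarrow> y \<in> K \<longrightarrow> y' \<in> K \<longrightarrow>
     norm (Dl ws \<xi> y' - Dl ws \<xi> y) \<le> L * prod_list (map norm ws) * norm (y' - y)"
    using lip_Dl[OF f K, of 1] by blast
  show ?thesis
  proof (intro exI conjI ballI)
    fix y assume y: "y \<in> K"
    show "mn (jacobian \<xi> (at y)) \<le> real CARD('m) * real CARD('n) * C"
    proof (rule mn_entry_bound)
      fix i j
      have "\<bar>jacobian \<xi> (at y) $ i $ j\<bar> \<le> norm (Dl [axis j 1] \<xi> y)"
        unfolding jac_entry by (rule component_le_norm_cart)
      also have "\<dots> \<le> C" using C(2)[rule_format, OF y, of "[axis j 1]"] by simp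
      finally show "\<bar>jacobian \<xi> (at y) $ i $ j\<bar> \<le> C" .
    qed
    fix y' assume y': "y' \<in> K"
    have "mn (jacobian \<xi> (at y') - jacobian \<xi> (at y)) \<le> real CARD('m) * real CARD('n) * (L * norm (y' - y))"
    proof (rule mn_entry_bound)
      fix i j
      have "\<bar>(jacobian \<xi> (at y') - jacobian \<xi> (at y)) $ i $ j\<bar> \<le> norm (Dl [axis j 1] \<xi> y' - Dl [axis j 1] \<xi> y)"
    proof -
        have "(jacobian \<xi> (at y') - jacobian \<xi> (at y)) $ i $ j = (Dl [axis j 1] \<xi> y' - Dl [axis j 1] \<xi> y) $ i"
          by (simp add: jac_entry)
        then show ?thesis by (simp only: component_le_norm_cart)
      qed
      also have "\<dots> \<le> L * norm (y' - y)" using L(2)[rule_format, of "[axis j 1]" y y'] y y' by simp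
      finally show "\<bar>(jacobian \<xi> (at y') - jacobian \<xi> (at y)) $ i $ j\<bar> \<le> L * norm (y' - y)" .
    qed
    then show "mn (jacobian \<xi> (at y') - jacobian \<xi> (at y)) \<le> (real CARD('m) * real CARD('n) * L) * norm (y' - y)"
      by (simp add: mult_ac)
  qed (use C L in auto)
qed

lemma n3m: "norm (x - y - z) \<le> norm x + norm y + norm (z::'a::real_normed_vector)"
  using norm_triangle_ineq4[of "x - y" z] norm_triangle_ineq4[of x y] by linarith

lemma n4: "norm (w - x + y + z) \<le> norm w + norm x + norm y + norm (z::'a::real_normed_vector)"
  using norm_triangle_ineq[of "w - x + y" z] norm_triangle_ineq[of "w - x" y] norm_triangle_ineq4[of w x] by linarith

lemma core_p14:
  fixes p14 pn c :: "real^'n" and l14 :: "real^'m" and Lm Mi :: "real^'n^'n"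
    and J0 :: "real^'n^'m" and Jt0 :: "real^'m^'n" and G0 K0 :: "real^'m^'m" and a cb :: real
  assumes eq: "p14 = pn - (a/4) *\<^sub>R (Lm *v (pn + p14)) + c + Jt0 *v l14"
    and tan: "J0 *v (Mi *v p14) = 0"
    and G0: "\<And>v. G0 *v v = J0 *v (Mi *v (Jt0 *v v))"
    and K0: "\<And>v. K0 *v (G0 *v v) = v"
    and c: "norm c \<le> cb" and a: "0 \<le> a" "a \<le> 1"
    and small: "a * (mn Lm / 4 + mn Jt0 * mn K0 * (mn J0 * mn Mi) * mn Lm / 4) \<le> 1/2"
  shows "norm p14 \<le> 2 * (norm pn + mn Lm * norm pn / 4 + cb + mn Jt0 * mn K0 * (mn J0 * mn Mi) * norm pn
      + mn Jt0 * mn K0 * (mn J0 * mn Mi) * mn Lm * norm pn / 4 + mn Jt0 * mn K0 * (mn J0 * mn Mi) * cb)"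
proof -
  define T where "T v = J0 *v (Mi *v v)" for v
  define t where "t = mn J0 * mn Mi"
  have Tn: "norm (T v) \<le> t * norm v" for v
  proof -
    have "norm (T v) \<le> mn J0 * norm (Mi *v v)" unfolding T_def by (rule mn_mv)
    also have "\<dots> \<le> mn J0 * (mn Mi * norm v)" by (rule mult_left_mono[OF mn_mv mn_nonneg])
    finally show ?thesis by (simp add: t_def mult_ac)
  qed
  have Tlin: "T (x + y) = T x + T y" "T (x - y) = T x - T y" "T (r *\<^sub>R x) = r *\<^sub>R T x" for x y r
    by (simp_all add: T_def algebra_simps)
  have "T p14 = T pn - (a/4) *\<^sub>R T (Lm *v (pn + p14)) + T c + G0 *v l14"
  proof -
    have "T p14 = T (pn - (a/4) *\<^sub>R (Lm *v (pn + p14)) + c + Jt0 *v l14)"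
      using arg_cong[OF eq, of T] .
    also have "\<dots> = T pn - (a/4) *\<^sub>R T (Lm *v (pn + p14)) + T c + T (Jt0 *v l14)"
      by (simp only: Tlin)
    finally show ?thesis by (simp add: G0 T_def)
  qed
  then have Gl: "G0 *v l14 = (a/4) *\<^sub>R T (Lm *v (pn + p14)) - T pn - T c"
    using tan by (simp add: T_def algebra_simps)
  define X where "X = norm p14"
  define Nl where "Nl = norm l14"
  have "Nl = norm (K0 *v (G0 *v l14))" by (simp add: K0 Nl_def)
  also have "\<dots> \<le> mn K0 * norm (G0 *v l14)" by (rule mn_mv)
  also have "norm (G0 *v l14) \<le> (a/4) * (t * (mn Lm * (norm pn + X))) + t * norm pn + t * cb"
  proof -
    have "norm (G0 *v l14) \<le> norm ((a/4) *\<^sub>R T (Lm *v (pn + p14))) + norm (T pn) + norm (T c)"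
      unfolding Gl by (rule n3m)
    moreover have "norm ((a/4) *\<^sub>R T (Lm *v (pn + p14))) \<le> (a/4) * (t * (mn Lm * (norm pn + X)))"
    proof -
      have "norm (T (Lm *v (pn + p14))) \<le> t * norm (Lm *v (pn + p14))" by (rule Tn)
      also have "\<dots> \<le> t * (mn Lm * norm (pn + p14))"
        by (rule mult_left_mono[OF mn_mv]) (simp add: t_def mn_nonneg)
      also have "\<dots> \<le> t * (mn Lm * (norm pn + X))"
        unfolding X_def by (intro mult_left_mono norm_triangle_ineq) (simp_all add: t_def mn_nonneg)
      finally show ?thesis using a by (simp add: mult_left_mono)
    qed
    moreover have "norm (T pn) \<le> t * norm pn" by (rule Tn)
    moreover have "norm (T c) \<le> t * cb"
      using Tn[of c] mult_left_mono[OF c, of t] by (simp add: t_def mn_nonneg)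
    ultimately show ?thesis by linarith
  qed
  then have "mn K0 * norm (G0 *v l14) \<le> mn K0 * ((a/4) * (t * (mn Lm * (norm pn + X))) + t * norm pn + t * cb)"
    by (rule mult_left_mono) (rule mn_nonneg)
  finally have h2: "Nl \<le> mn K0 * ((a/4) * (t * (mn Lm * (norm pn + X))) + t * norm pn + t * cb)" .
  have h1: "X \<le> norm pn + (a/4) * (mn Lm * (norm pn + X)) + cb + mn Jt0 * Nl"
  proof -
    have "X \<le> norm pn + norm ((a/4) *\<^sub>R (Lm *v (pn + p14))) + norm c + norm (Jt0 *v l14)"
      unfolding X_def by (subst eq) (rule n4)
    moreover have "norm ((a/4) *\<^sub>R (Lm *v (pn + p14))) \<le> (a/4) * (mn Lm * (norm pn + X))"
    proof -
      have "norm (Lm *v (pn + p14)) \<le> mn Lm * (norm pn + X)"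
        unfolding X_def by (rule order_trans[OF mn_mv]) (intro mult_left_mono norm_triangle_ineq mn_nonneg)
      then show ?thesis using a by (simp add: mult_left_mono)
    qed
    moreover have "norm (Jt0 *v l14) \<le> mn Jt0 * Nl" unfolding Nl_def by (rule mn_mv)
    ultimately show ?thesis using c by linarith
  qed
  have F1: "a * (mn Lm * norm pn) \<le> mn Lm * norm pn"
    using a by (intro mult_left_le_one_le) (simp_all add: mn_nonneg)
  have F2: "a * (mn Jt0 * mn K0 * t * mn Lm * norm pn) \<le> mn Jt0 * mn K0 * t * mn Lm * norm pn"
    using a by (intro mult_left_le_one_le) (simp_all add: mn_nonneg t_def)
  have h2': "mn Jt0 * Nl \<le> mn Jt0 * (mn K0 * ((a/4) * (t * (mn Lm * (norm pn + X))) + t * norm pn + t * cb))"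
    by (rule mult_left_mono[OF h2 mn_nonneg])
  have "X \<le> (norm pn + mn Lm * norm pn / 4 + cb + mn Jt0 * mn K0 * t * norm pn
      + mn Jt0 * mn K0 * t * mn Lm * norm pn / 4 + mn Jt0 * mn K0 * t * cb)
      + (a * (mn Lm / 4 + mn Jt0 * mn K0 * t * mn Lm / 4)) * X"
  proof -
    have e: "mn Jt0 * (mn K0 * ((a/4) * (t * (mn Lm * (norm pn + X))) + t * norm pn + t * cb))
      = (a/4) * (mn Jt0 * mn K0 * t * mn Lm * norm pn) + (a * (mn Jt0 * mn K0 * t * mn Lm / 4)) * X
        + mn Jt0 * mn K0 * t * norm pn + mn Jt0 * mn K0 * t * cb"
      by (simp add: algebra_simps)
    have e2: "(a/4) * (mn Lm * (norm pn + X)) = (a/4) * (mn Lm * norm pn) + (a * (mn Lm / 4)) * X"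
      by (simp add: algebra_simps)
    have e3: "(a * (mn Lm / 4 + mn Jt0 * mn K0 * t * mn Lm / 4)) * X = (a * (mn Lm / 4)) * X + (a * (mn Jt0 * mn K0 * t * mn Lm / 4)) * X"
      by (simp add: algebra_simps)
    show ?thesis using h1 h2' F1 F2 unfolding e e2 e3 by linarith
  qed
  then have "X \<le> 2 * (norm pn + mn Lm * norm pn / 4 + cb + mn Jt0 * mn K0 * t * norm pn
      + mn Jt0 * mn K0 * t * mn Lm * norm pn / 4 + mn Jt0 * mn K0 * t * cb)"
    by (rule absorb) (use small in \<open>simp_all add: t_def X_def\<close>)
  then show ?thesis by (simp add: X_def t_def)
qed

lemma D1:
  fixes p14 p12 gV0 :: "real^'n" and l12 :: "real^'m" and Mi :: "real^'n^'n"
    and J0 :: "real^'n^'m" and Jt0 :: "real^'m^'n" and G0 :: "real^'m^'m" and a :: real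
  assumes S3: "p12 = p14 - (a/2) *\<^sub>R gV0 + Jt0 *v l12"
    and tan: "J0 *v (Mi *v p14) = 0"
    and G0: "\<And>v. G0 *v v = J0 *v (Mi *v (Jt0 *v v))"
  shows "G0 *v l12 = J0 *v (Mi *v p12) + (a/2) *\<^sub>R (J0 *v (Mi *v gV0))"
proof -
  have "J0 *v (Mi *v p12) = J0 *v (Mi *v p14) - (a/2) *\<^sub>R (J0 *v (Mi *v gV0)) + J0 *v (Mi *v (Jt0 *v l12))"
    unfolding S3 by (simp add: algebra_simps)
  then show ?thesis using tan by (simp add: G0)
qed

lemma D2:
  fixes p34 p12 gV1 :: "real^'n" and l34 :: "real^'m" and Mi :: "real^'n^'n"
    and J1 :: "real^'n^'m" and Jt1 :: "real^'m^'n" and G1 :: "real^'m^'m" and a :: real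
  assumes S6: "p34 = p12 - (a/2) *\<^sub>R gV1 + Jt1 *v l34"
    and tan: "J1 *v (Mi *v p34) = 0"
    and G1: "\<And>v. G1 *v v = J1 *v (Mi *v (Jt1 *v v))"
  shows "G1 *v l34 = - (J1 *v (Mi *v p12)) + (a/2) *\<^sub>R (J1 *v (Mi *v gV1))"
proof -
  have "J1 *v (Mi *v p34) = J1 *v (Mi *v p12) - (a/2) *\<^sub>R (J1 *v (Mi *v gV1)) + J1 *v (Mi *v (Jt1 *v l34))"
    unfolding S6 by (simp add: algebra_simps)
  then show ?thesis using tan by (simp add: G1 algebra_simps)
qed

lemma core_l12:
  fixes p14 p12 gV0 u :: "real^'n" and l12 :: "real^'m" and Mi :: "real^'n^'n"
    and J0 :: "real^'n^'m" and Jt0 :: "real^'m^'n" and G0 K0 :: "real^'m^'m" and a P BV Q \<rho> :: real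
  assumes S3: "p12 = p14 - (a/2) *\<^sub>R gV0 + Jt0 *v l12"
    and D1: "G0 *v l12 = J0 *v u + (a/2) *\<^sub>R (J0 *v (Mi *v gV0))"
    and u: "u = Mi *v p12"
    and K0: "\<And>v. K0 *v (G0 *v v) = v"
    and Ju: "norm (J0 *v u) \<le> Q * norm u * \<rho>"
    and P: "norm p14 \<le> P" and BV: "norm gV0 \<le> BV" and a: "0 \<le> a" "a \<le> 1"
    and Q: "0 \<le> Q" "0 \<le> \<rho>"
    and small: "mn K0 * Q * \<rho> * mn Mi * mn Jt0 \<le> 1/2"
  shows "norm l12 \<le> 2 * (mn K0 * (Q * \<rho> * mn Mi * (P + BV)) + mn K0 * norm (J0 *v (Mi *v gV0)))"
proof -
  define X where "X = norm l12"
  define \<alpha> where "\<alpha> = norm (J0 *v (Mi *v gV0))"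
  have X0: "0 \<le> X" by (simp add: X_def)
  have hu: "norm u \<le> mn Mi * (P + BV + mn Jt0 * X)"
  proof -
    have "norm p12 \<le> norm p14 + norm ((a/2) *\<^sub>R gV0) + norm (Jt0 *v l12)"
      unfolding S3 using norm_triangle_ineq[of "p14 - (a/2) *\<^sub>R gV0" "Jt0 *v l12"] norm_triangle_ineq4[of p14 "(a/2) *\<^sub>R gV0"]
      by linarith
    moreover have "norm ((a/2) *\<^sub>R gV0) \<le> BV"
    proof -
      have "norm ((a/2) *\<^sub>R gV0) = (a/2) * norm gV0" using a by simp
      also have "\<dots> \<le> 1 * norm gV0" using a by (intro mult_right_mono) auto
      finally show ?thesis using BV by simp
    qed
    moreover have "norm (Jt0 *v l12) \<le> mn Jt0 * X" unfolding X_def by (rule mn_mv)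
    ultimately have "norm p12 \<le> P + BV + mn Jt0 * X" using P by linarith
    then have "mn Mi * norm p12 \<le> mn Mi * (P + BV + mn Jt0 * X)" by (rule mult_left_mono[OF _ mn_nonneg])
    then show ?thesis using mn_mv[of Mi p12] u by simp
  qed
  have "X = norm (K0 *v (G0 *v l12))" by (simp add: K0 X_def)
  also have "\<dots> \<le> mn K0 * norm (G0 *v l12)" by (rule mn_mv)
  also have "\<dots> \<le> mn K0 * (Q * \<rho> * (mn Mi * (P + BV + mn Jt0 * X)) + \<alpha>)"
  proof (rule mult_left_mono[OF _ mn_nonneg])
    have "norm (G0 *v l12) \<le> norm (J0 *v u) + norm ((a/2) *\<^sub>R (J0 *v (Mi *v gV0)))"
      unfolding D1 by (rule norm_triangle_ineq)
    also have "norm ((a/2) *\<^sub>R (J0 *v (Mi *v gV0))) \<le> \<alpha>"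
    proof -
      have "norm ((a/2) *\<^sub>R (J0 *v (Mi *v gV0))) = (a/2) * \<alpha>" using a by (simp add: \<alpha>_def)
      also have "\<dots> \<le> 1 * \<alpha>" using a by (intro mult_right_mono) (auto simp: \<alpha>_def)
      finally show ?thesis by simp
    qed
    also have "norm (J0 *v u) \<le> Q * \<rho> * (mn Mi * (P + BV + mn Jt0 * X))"
    proof -
      have "Q * norm u * \<rho> = Q * \<rho> * norm u" by simp
      also have "\<dots> \<le> Q * \<rho> * (mn Mi * (P + BV + mn Jt0 * X))"
        by (rule mult_left_mono[OF hu]) (use Q in simp)
      finally show ?thesis using Ju by linarith
    qed
    finally show "norm (G0 *v l12) \<le> Q * \<rho> * (mn Mi * (P + BV + mn Jt0 * X)) + \<alpha>"
      by linarith
  qed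
  also have "\<dots> = (mn K0 * (Q * \<rho> * mn Mi * (P + BV)) + mn K0 * \<alpha>) + (mn K0 * Q * \<rho> * mn Mi * mn Jt0) * X"
    by (simp add: algebra_simps)
  finally have "X \<le> (mn K0 * (Q * \<rho> * mn Mi * (P + BV)) + mn K0 * \<alpha>) + (mn K0 * Q * \<rho> * mn Mi * mn Jt0) * X" .
  then have "X \<le> 2 * (mn K0 * (Q * \<rho> * mn Mi * (P + BV)) + mn K0 * \<alpha>)"
    by (rule absorb[OF _ small X0])
  then show ?thesis by (simp add: X_def \<alpha>_def)
qed

lemma vsplit: "x + z - c *\<^sub>R (f + g) = (x - c *\<^sub>R f) + (z - c *\<^sub>R (g::'a::real_vector))"
  by (simp add: algebra_simps)

lemma core_123:
  fixes u gV0 gV1 :: "real^'n" and l12 l34 :: "real^'m" and Mi :: "real^'n^'n"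
    and J0 J1 :: "real^'n^'m" and G0 G1 K0 K1 :: "real^'m^'m"
    and HA HB :: "real^'n \<Rightarrow> real^'n \<Rightarrow> real^'m"
    and a nd U LG \<kappa> R1 R2 R3 :: real
  assumes D1: "G0 *v l12 = J0 *v u + (a/2) *\<^sub>R (J0 *v (Mi *v gV0))"
    and D2: "G1 *v l34 = - (J1 *v u) + (a/2) *\<^sub>R (J1 *v (Mi *v gV1))"
    and K0: "\<And>v. K0 *v (G0 *v v) = v" "\<And>v. G0 *v (K0 *v v) = v"
    and K1: "\<And>v. K1 *v (G1 *v v) = v"
    and \<kappa>: "\<And>v. norm (K1 *v v) \<le> \<kappa> * norm v"
    and LG: "\<And>v. norm (G1 *v v - G0 *v v) \<le> LG * nd * norm v"
    and nd: "0 \<le> nd" "nd \<le> U * a" and a: "0 \<le> a"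
    and pos: "0 \<le> \<kappa>" "0 \<le> LG" "0 \<le> U"
    and TA: "norm (J0 *v u + (a/2) *\<^sub>R HA u u) \<le> R1 * a^2"
    and TB: "norm (- (J1 *v u) + (a/2) *\<^sub>R HB u u) \<le> R2 * a^2"
    and TC: "norm ((J0 *v u + (a/2) *\<^sub>R HA u u) + (- (J1 *v u) + (a/2) *\<^sub>R HB u u)) \<le> R3 * a^3"
  shows "norm (l12 - (a/2) *\<^sub>R (K0 *v (J0 *v (Mi *v gV0)) - K0 *v HA u u)) \<le> (mn K0 * R1) * a^2"
    and "norm (l34 - (a/2) *\<^sub>R (K1 *v (J1 *v (Mi *v gV1)) - K1 *v HB u u)) \<le> (\<kappa> * R2) * a^2"
    and "norm (l12 + l34 - (a/2) *\<^sub>R ((K0 *v (J0 *v (Mi *v gV0)) - K0 *v HA u u)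
           + (K1 *v (J1 *v (Mi *v gV1)) - K1 *v HB u u))) \<le> (mn K0 * R3 + \<kappa> * LG * U * mn K0 * R2) * a^3"
proof -
  define r1 where "r1 = J0 *v u + (a/2) *\<^sub>R HA u u"
  define r2 where "r2 = - (J1 *v u) + (a/2) *\<^sub>R HB u u"
  have e1: "l12 - (a/2) *\<^sub>R (K0 *v (J0 *v (Mi *v gV0)) - K0 *v HA u u) = K0 *v r1"
  proof -
    have "l12 = K0 *v (J0 *v u + (a/2) *\<^sub>R (J0 *v (Mi *v gV0)))" using K0(1)[of l12] D1 by simp
    then show ?thesis by (simp add: r1_def algebra_simps)
  qed
  have e2: "l34 - (a/2) *\<^sub>R (K1 *v (J1 *v (Mi *v gV1)) - K1 *v HB u u) = K1 *v r2"
  proof -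
    have "l34 = K1 *v (- (J1 *v u) + (a/2) *\<^sub>R (J1 *v (Mi *v gV1)))" using K1[of l34] D2 by simp
    then show ?thesis by (simp add: r2_def algebra_simps)
  qed
  show "norm (l12 - (a/2) *\<^sub>R (K0 *v (J0 *v (Mi *v gV0)) - K0 *v HA u u)) \<le> (mn K0 * R1) * a^2"
    unfolding e1 using mn_mv[of K0 r1] mult_left_mono[OF TA[folded r1_def] mn_nonneg[of K0]]
    by (simp add: mult_ac)
  show "norm (l34 - (a/2) *\<^sub>R (K1 *v (J1 *v (Mi *v gV1)) - K1 *v HB u u)) \<le> (\<kappa> * R2) * a^2"
    unfolding e2 using \<kappa>[of r2] mult_left_mono[OF TB[folded r2_def] pos(1)]
    by (simp add: mult_ac)
  define z where "z = K0 *v r2"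
  have ez: "K1 *v r2 - K0 *v r2 = K1 *v (G0 *v z - G1 *v z)"
    by (simp add: z_def K0 K1 matrix_vector_mult_diff_distrib)
  have "l12 + l34 - (a/2) *\<^sub>R ((K0 *v (J0 *v (Mi *v gV0)) - K0 *v HA u u)
           + (K1 *v (J1 *v (Mi *v gV1)) - K1 *v HB u u)) = K0 *v r1 + K1 *v r2"
    unfolding vsplit e1[symmetric] e2[symmetric] ..
  also have "\<dots> = K0 *v (r1 + r2) + K1 *v (G0 *v z - G1 *v z)"
    using ez by (simp add: algebra_simps)
  finally have eq3: "l12 + l34 - (a/2) *\<^sub>R ((K0 *v (J0 *v (Mi *v gV0)) - K0 *v HA u u)
           + (K1 *v (J1 *v (Mi *v gV1)) - K1 *v HB u u)) = K0 *v (r1 + r2) + K1 *v (G0 *v z - G1 *v z)" .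
  have b1: "norm (K0 *v (r1 + r2)) \<le> mn K0 * R3 * a^3"
    using mn_mv[of K0 "r1 + r2"] mult_left_mono[OF TC[folded r1_def r2_def] mn_nonneg[of K0]]
    by (simp add: mult_ac)
  have b2: "norm (K1 *v (G0 *v z - G1 *v z)) \<le> \<kappa> * LG * U * mn K0 * R2 * a^3"
  proof -
    have nz: "norm z \<le> mn K0 * (R2 * a^2)"
      unfolding z_def using mn_mv[of K0 r2] mult_left_mono[OF TB[folded r2_def] mn_nonneg[of K0]] by simp
    have h1: "norm (K1 *v (G0 *v z - G1 *v z)) \<le> \<kappa> * norm (G0 *v z - G1 *v z)" by (rule \<kappa>)
    have "norm (G0 *v z - G1 *v z) \<le> LG * nd * norm z" using LG[of z] by (simp add: norm_minus_commute)
    also have "\<dots> \<le> LG * (U * a) * (mn K0 * (R2 * a^2))"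
      using nd pos by (intro mult_mono nz mult_left_mono) auto
    finally have h2: "\<kappa> * norm (G0 *v z - G1 *v z) \<le> \<kappa> * (LG * (U * a) * (mn K0 * (R2 * a^2)))"
      by (rule mult_left_mono[OF _ pos(1)])
    have h3: "\<kappa> * (LG * (U * a) * (mn K0 * (R2 * a^2))) = \<kappa> * LG * U * mn K0 * R2 * a^3"
      by (simp add: power3_eq_cube power2_eq_square mult_ac)
    show ?thesis using h1 h2 h3 by linarith
  qed
  show "norm (l12 + l34 - (a/2) *\<^sub>R ((K0 *v (J0 *v (Mi *v gV0)) - K0 *v HA u u)
           + (K1 *v (J1 *v (Mi *v gV1)) - K1 *v HB u u))) \<le> (mn K0 * R3 + \<kappa> * LG * U * mn K0 * R2) * a^3"
    unfolding eq3 using norm_triangle_ineq[of "K0 *v (r1 + r2)" "K1 *v (G0 *v z - G1 *v z)"] b1 b2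
    by (simp add: algebra_simps)
qed

lemma mm3: "0 \<le> c \<Longrightarrow> 0 \<le> x \<Longrightarrow> x \<le> X \<Longrightarrow> 0 \<le> y \<Longrightarrow> y \<le> Y \<Longrightarrow> c * x * y \<le> c * X * (Y::real)"
  by (intro mult_mono mult_left_mono) auto

lemma core_lam:
  fixes u gV0 gV1 :: "real^'n" and l12 l34 :: "real^'m" and Mi :: "real^'n^'n"
    and J0 J1 :: "real^'n^'m" and G0 G1 K0 K1 :: "real^'m^'m"
    and HA HB :: "real^'n \<Rightarrow> real^'n \<Rightarrow> real^'m"
    and a nd U LG \<kappa> R1 R2 R2' Q BJ BV LJ LV LH C2 :: real
  assumes D1: "G0 *v l12 = J0 *v u + (a/2) *\<^sub>R (J0 *v (Mi *v gV0))"
    and D2: "G1 *v l34 = - (J1 *v u) + (a/2) *\<^sub>R (J1 *v (Mi *v gV1))"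
    and K0: "\<And>v. K0 *v (G0 *v v) = v" "\<And>v. G0 *v (K0 *v v) = v"
    and K1: "\<And>v. K1 *v (G1 *v v) = v"
    and \<kappa>: "\<And>v. norm (K1 *v v) \<le> \<kappa> * norm v"
    and LG: "\<And>v. norm (G1 *v v - G0 *v v) \<le> LG * nd * norm v"
    and nd: "0 \<le> nd" "nd \<le> U * a" and a: "0 < a" "a \<le> 1"
    and pos: "0 \<le> \<kappa>" "0 \<le> LG" "0 \<le> U" "0 \<le> BJ" "0 \<le> BV" "0 \<le> C2" "0 \<le> LJ" "0 \<le> LV" "0 \<le> LH" "0 \<le> Q"
    and uU: "norm u \<le> U"
    and Ju: "norm (J0 *v u) \<le> Q * norm u * nd"
    and BJ: "mn J0 \<le> BJ" "mn J1 \<le> BJ" and BV: "norm gV0 \<le> BV" "norm gV1 \<le> BV"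
    and LJ: "mn (J1 - J0) \<le> LJ * nd" and LV: "norm (gV1 - gV0) \<le> LV * nd"
    and Hb: "\<And>v w. norm (HB v w) \<le> C2 * norm v * norm w" "\<And>v w. norm (HA v w) \<le> C2 * norm v * norm w"
    and LH: "\<And>v w. norm (HB v w - HA v w) \<le> LH * nd * norm v * norm w"
    and C1: "norm (l12 - (a/2) *\<^sub>R (K0 *v (J0 *v (Mi *v gV0)) - K0 *v HA u u)) \<le> R1 * a^2"
    and C2: "norm (l34 - (a/2) *\<^sub>R (K1 *v (J1 *v (Mi *v gV1)) - K1 *v HB u u)) \<le> R2 * a^2"
    and TB: "norm (- (J1 *v u) + (a/2) *\<^sub>R HB u u) \<le> R2' * a^2"
  shows "norm l12 \<le> (mn K0 * (Q * U * U + BJ * mn Mi * BV / 2)) * a"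
    and "norm l34 \<le> (\<kappa> * (R2' + C2 * U * U / 2 + BJ * mn Mi * BV / 2)) * a"
    and "norm (l34 - l12) \<le> (R2 + R1 + (\<kappa> * ((LJ * mn Mi * BV + BJ * mn Mi * LV + LH * U * U) * U)
            + \<kappa> * LG * U * mn K0 * (BJ * mn Mi * BV + C2 * U * U)) / 2) * a^2"
proof -
  have R2'0: "0 \<le> R2'"
  proof -
    have "0 \<le> R2' * a^2" using TB norm_ge_zero order_trans by blast
    then show ?thesis using a by (simp add: zero_le_mult_iff)
  qed
  have nu0: "0 \<le> norm u" by simp
  define \<alpha>0 where "\<alpha>0 = J0 *v (Mi *v gV0)"
  define \<alpha>1 where "\<alpha>1 = J1 *v (Mi *v gV1)"
  have na0: "norm \<alpha>0 \<le> BJ * mn Mi * BV"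
  proof -
    have "norm \<alpha>0 \<le> mn J0 * norm (Mi *v gV0)" unfolding \<alpha>0_def by (rule mn_mv)
    also have "\<dots> \<le> BJ * (mn Mi * BV)"
      using BJ(1) mn_mv[of Mi gV0] mult_left_mono[OF BV(1) mn_nonneg[of Mi]] pos
      by (intro mult_mono) auto
    finally show ?thesis by (simp add: mult_ac)
  qed
  have na1: "norm \<alpha>1 \<le> BJ * mn Mi * BV"
  proof -
    have "norm \<alpha>1 \<le> mn J1 * norm (Mi *v gV1)" unfolding \<alpha>1_def by (rule mn_mv)
    also have "\<dots> \<le> BJ * (mn Mi * BV)"
      using BJ(2) mn_mv[of Mi gV1] mult_left_mono[OF BV(2) mn_nonneg[of Mi]] pos
      by (intro mult_mono) auto
    finally show ?thesis by (simp add: mult_ac)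
  qed
  have nh1: "norm (HB u u) \<le> C2 * U * U"
    using Hb(1)[of u u] mm3[OF pos(6) nu0 uU nu0 uU] by linarith
  have nh0: "norm (HA u u) \<le> C2 * U * U"
    using Hb(2)[of u u] mm3[OF pos(6) nu0 uU nu0 uU] by linarith
  have e12: "l12 = K0 *v (J0 *v u + (a/2) *\<^sub>R \<alpha>0)" using K0(1)[of l12] D1 by (simp add: \<alpha>0_def)
  have "norm l12 \<le> mn K0 * norm (J0 *v u + (a/2) *\<^sub>R \<alpha>0)"
    using mn_mv[of K0 "J0 *v u + (a/2) *\<^sub>R \<alpha>0"] e12 by simp
  also have "norm (J0 *v u + (a/2) *\<^sub>R \<alpha>0) \<le> (Q * U * U + BJ * mn Mi * BV / 2) * a"
  proof -
    have "norm (J0 *v u) \<le> Q * U * (U * a)"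
      using Ju mm3[OF pos(10) nu0 uU nd] by linarith
    moreover have "norm ((a/2) *\<^sub>R \<alpha>0) \<le> (a/2) * (BJ * mn Mi * BV)"
      using na0 a by (simp add: mult_left_mono)
    ultimately show ?thesis using norm_triangle_ineq[of "J0 *v u" "(a/2) *\<^sub>R \<alpha>0"]
      by (simp add: algebra_simps)
  qed
  finally show "norm l12 \<le> (mn K0 * (Q * U * U + BJ * mn Mi * BV / 2)) * a"
    using mn_nonneg[of K0] by (simp add: mult_left_mono mult.assoc)
  have e34: "l34 = K1 *v ((- (J1 *v u) + (a/2) *\<^sub>R HB u u) + (a/2) *\<^sub>R (\<alpha>1 - HB u u))"
    using K1[of l34] D2 by (simp add: \<alpha>1_def algebra_simps)
  have "norm l34 \<le> \<kappa> * norm ((- (J1 *v u) + (a/2) *\<^sub>R HB u u) + (a/2) *\<^sub>R (\<alpha>1 - HB u u))"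
    using \<kappa>[of "(- (J1 *v u) + (a/2) *\<^sub>R HB u u) + (a/2) *\<^sub>R (\<alpha>1 - HB u u)"] e34 by simp
  also have "norm ((- (J1 *v u) + (a/2) *\<^sub>R HB u u) + (a/2) *\<^sub>R (\<alpha>1 - HB u u))
      \<le> (R2' + C2 * U * U / 2 + BJ * mn Mi * BV / 2) * a"
  proof -
    have "R2' * a^2 \<le> R2' * a" using a R2'0 by (simp add: power2_eq_square mult_left_le_one_le mult_left_mono)
    then have t1: "norm (- (J1 *v u) + (a/2) *\<^sub>R HB u u) \<le> R2' * a" using TB by linarith
    have "norm (\<alpha>1 - HB u u) \<le> BJ * mn Mi * BV + C2 * U * U"
      using norm_triangle_ineq4[of \<alpha>1 "HB u u"] na1 nh1 by linarith
    then have t2: "norm ((a/2) *\<^sub>R (\<alpha>1 - HB u u)) \<le> (a/2) * (BJ * mn Mi * BV + C2 * U * U)"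
      using a by (simp add: mult_left_mono)
    show ?thesis using norm_triangle_ineq[of "- (J1 *v u) + (a/2) *\<^sub>R HB u u" "(a/2) *\<^sub>R (\<alpha>1 - HB u u)"] t1 t2
      by (simp add: algebra_simps)
  qed
  finally show "norm l34 \<le> (\<kappa> * (R2' + C2 * U * U / 2 + BJ * mn Mi * BV / 2)) * a"
    using pos(1) by (simp add: mult_left_mono mult.assoc)
  define F0 where "F0 = K0 *v (\<alpha>0 - HA u u)"
  define F1 where "F1 = K1 *v (\<alpha>1 - HB u u)"
  have eqd: "l34 - l12 = (l34 - (a/2) *\<^sub>R (K1 *v (J1 *v (Mi *v gV1)) - K1 *v HB u u))
      - (l12 - (a/2) *\<^sub>R (K0 *v (J0 *v (Mi *v gV0)) - K0 *v HA u u)) + (a/2) *\<^sub>R (F1 - F0)"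
    by (simp add: F0_def F1_def \<alpha>0_def \<alpha>1_def algebra_simps)
  define z where "z = K0 *v (\<alpha>0 - HA u u)"
  have eF: "F1 - F0 = K1 *v ((\<alpha>1 - HB u u) - (\<alpha>0 - HA u u)) + K1 *v (G0 *v z - G1 *v z)"
    by (simp add: F0_def F1_def z_def K0 K1 algebra_simps)
  define W where "W = LJ * mn Mi * BV + BJ * mn Mi * LV + LH * U * U"
  have W0: "0 \<le> W" using pos mn_nonneg[of Mi] by (simp add: W_def)
  have Fd: "norm (F1 - F0) \<le> (\<kappa> * (W * U) + \<kappa> * LG * U * mn K0 * (BJ * mn Mi * BV + C2 * U * U)) * a"
  proof -
    have db: "norm ((\<alpha>1 - HB u u) - (\<alpha>0 - HA u u)) \<le> W * nd"
    proof -
      have ea: "\<alpha>1 - \<alpha>0 = (J1 - J0) *v (Mi *v gV1) + J0 *v (Mi *v (gV1 - gV0))"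
        by (simp add: \<alpha>0_def \<alpha>1_def algebra_simps)
      have n1: "norm ((J1 - J0) *v (Mi *v gV1)) \<le> LJ * mn Mi * BV * nd"
      proof -
        have "norm ((J1 - J0) *v (Mi *v gV1)) \<le> mn (J1 - J0) * norm (Mi *v gV1)" by (rule mn_mv)
        also have "\<dots> \<le> (LJ * nd) * (mn Mi * BV)"
          using LJ mn_mv[of Mi gV1] mult_left_mono[OF BV(2) mn_nonneg[of Mi]] pos mn_nonneg[of "J1 - J0"]
          by (intro mult_mono) auto
        finally show ?thesis by (simp add: mult_ac)
      qed
      have n2: "norm (J0 *v (Mi *v (gV1 - gV0))) \<le> BJ * mn Mi * LV * nd"
      proof -
        have "norm (J0 *v (Mi *v (gV1 - gV0))) \<le> mn J0 * norm (Mi *v (gV1 - gV0))" by (rule mn_mv)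
        also have "\<dots> \<le> BJ * (mn Mi * (LV * nd))"
          using BJ(1) mn_mv[of Mi "gV1 - gV0"] mult_left_mono[OF LV mn_nonneg[of Mi]] pos
          by (intro mult_mono) auto
        finally show ?thesis by (simp add: mult_ac)
      qed
      have n3: "norm (HB u u - HA u u) \<le> LH * U * U * nd"
      proof -
        have "norm (HB u u - HA u u) \<le> LH * nd * norm u * norm u" by (rule LH)
        also have "\<dots> \<le> LH * nd * U * U"
          using mm3[of "LH * nd" "norm u" U "norm u" U] uU pos nd by simp
        finally show ?thesis by (simp add: mult_ac)
      qed
      have eqv: "(\<alpha>1 - HB u u) - (\<alpha>0 - HA u u) = ((J1 - J0) *v (Mi *v gV1) + J0 *v (Mi *v (gV1 - gV0))) - (HB u u - HA u u)"
        using ea by (simp add: algebra_simps)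
      have "norm (((J1 - J0) *v (Mi *v gV1) + J0 *v (Mi *v (gV1 - gV0))) - (HB u u - HA u u))
         \<le> norm ((J1 - J0) *v (Mi *v gV1)) + norm (J0 *v (Mi *v (gV1 - gV0))) + norm (HB u u - HA u u)"
        using norm_triangle_ineq4[of "(J1 - J0) *v (Mi *v gV1) + J0 *v (Mi *v (gV1 - gV0))" "HB u u - HA u u"]
          norm_triangle_ineq[of "(J1 - J0) *v (Mi *v gV1)" "J0 *v (Mi *v (gV1 - gV0))"] by linarith
      moreover have "W * nd = LJ * mn Mi * BV * nd + BJ * mn Mi * LV * nd + LH * U * U * nd"
        by (simp add: W_def algebra_simps)
      ultimately show ?thesis unfolding eqv using n1 n2 n3 by linarith
    qed
    have p1: "norm (K1 *v ((\<alpha>1 - HB u u) - (\<alpha>0 - HA u u))) \<le> \<kappa> * (W * U) * a"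
    proof -
      have "W * nd \<le> W * (U * a)" using nd W0 by (intro mult_left_mono) auto
      then have "norm ((\<alpha>1 - HB u u) - (\<alpha>0 - HA u u)) \<le> W * (U * a)" using db by linarith
      then have "\<kappa> * norm ((\<alpha>1 - HB u u) - (\<alpha>0 - HA u u)) \<le> \<kappa> * (W * (U * a))"
        by (rule mult_left_mono[OF _ pos(1)])
      then show ?thesis using \<kappa>[of "(\<alpha>1 - HB u u) - (\<alpha>0 - HA u u)"] by (simp add: mult_ac)
    qed
    have nz: "norm z \<le> mn K0 * (BJ * mn Mi * BV + C2 * U * U)"
    proof -
      have "norm (\<alpha>0 - HA u u) \<le> BJ * mn Mi * BV + C2 * U * U"
        using norm_triangle_ineq4[of \<alpha>0 "HA u u"] na0 nh0 by linarith
      then have "mn K0 * norm (\<alpha>0 - HA u u) \<le> mn K0 * (BJ * mn Mi * BV + C2 * U * U)"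
        by (rule mult_left_mono[OF _ mn_nonneg])
      then show ?thesis unfolding z_def using mn_mv[of K0 "\<alpha>0 - HA u u"] by linarith
    qed
    have p2: "norm (K1 *v (G0 *v z - G1 *v z)) \<le> \<kappa> * LG * U * mn K0 * (BJ * mn Mi * BV + C2 * U * U) * a"
    proof -
      have "norm (G0 *v z - G1 *v z) \<le> LG * nd * norm z" using LG[of z] by (simp add: norm_minus_commute)
      also have "\<dots> \<le> LG * (U * a) * (mn K0 * (BJ * mn Mi * BV + C2 * U * U))"
        using nd pos by (intro mult_mono nz mult_left_mono) auto
      finally have "\<kappa> * norm (G0 *v z - G1 *v z) \<le> \<kappa> * (LG * (U * a) * (mn K0 * (BJ * mn Mi * BV + C2 * U * U)))"
        by (rule mult_left_mono[OF _ pos(1)])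
      then show ?thesis using \<kappa>[of "G0 *v z - G1 *v z"] by (simp add: mult_ac)
    qed
    show ?thesis unfolding eF using norm_triangle_ineq[of "K1 *v ((\<alpha>1 - HB u u) - (\<alpha>0 - HA u u))" "K1 *v (G0 *v z - G1 *v z)"] p1 p2
      by (simp add: algebra_simps)
  qed
  have tri: "norm (l34 - l12) \<le> norm (l34 - (a/2) *\<^sub>R (K1 *v (J1 *v (Mi *v gV1)) - K1 *v HB u u))
      + norm (l12 - (a/2) *\<^sub>R (K0 *v (J0 *v (Mi *v gV0)) - K0 *v HA u u)) + norm ((a/2) *\<^sub>R (F1 - F0))"
    unfolding eqd by (rule order_trans[OF norm_triangle_ineq]) (simp add: norm_triangle_ineq4)
  have "norm ((a/2) *\<^sub>R (F1 - F0)) \<le> (a/2) * ((\<kappa> * (W * U) + \<kappa> * LG * U * mn K0 * (BJ * mn Mi * BV + C2 * U * U)) * a)"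
    using Fd a by (simp add: mult_left_mono)
  then have "norm (l34 - l12) \<le> R2 * a^2 + R1 * a^2 + (a/2) * ((\<kappa> * (W * U) + \<kappa> * LG * U * mn K0 * (BJ * mn Mi * BV + C2 * U * U)) * a)"
    using tri C1 C2 by linarith
  moreover have "R2 * a^2 + R1 * a^2 + (a/2) * ((\<kappa> * (W * U) + \<kappa> * LG * U * mn K0 * (BJ * mn Mi * BV + C2 * U * U)) * a)
     = (R2 + R1 + (\<kappa> * ((LJ * mn Mi * BV + BJ * mn Mi * LV + LH * U * U) * U)
            + \<kappa> * LG * U * mn K0 * (BJ * mn Mi * BV + C2 * U * U)) / 2) * a^2"
    by (simp add: W_def field_simps power2_eq_square)
  ultimately show "norm (l34 - l12) \<le> (R2 + R1 + (\<kappa> * ((LJ * mn Mi * BV + BJ * mn Mi * LV + LH * U * U) * U)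
            + \<kappa> * LG * U * mn K0 * (BJ * mn Mi * BV + C2 * U * U)) / 2) * a^2"
    by linarith
qed

lemma n5: "norm (p + q + r - s - t) \<le> norm p + norm q + norm r + norm s + norm (t::'a::real_normed_vector)"
proof -
  have "norm (p + q + r - s - t) \<le> norm (p + q + r - s) + norm t" by (rule norm_triangle_ineq4)
  moreover have "norm (p + q + r - s) \<le> norm (p + q + r) + norm s" by (rule norm_triangle_ineq4)
  moreover have "norm (p + q + r) \<le> norm (p + q) + norm r" by (rule norm_triangle_ineq)
  moreover have "norm (p + q) \<le> norm p + norm q" by (rule norm_triangle_ineq)
  ultimately show ?thesis by linarith
qed

lemma core_4:
  fixes u p12 p14 p34 gV0 gV1 :: "real^'n" and l12 l34 :: "real^'m" and Mi :: "real^'n^'n"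
    and J0 J1 :: "real^'n^'m" and Jt0 Jt1 :: "real^'m^'n" and G0 G1 K0 K1 :: "real^'m^'m"
    and HA HB :: "real^'n \<Rightarrow> real^'n \<Rightarrow> real^'m"
    and a nd U LG \<kappa> BJ BV LJ LV LH C2 \<Lambda>1 \<Lambda>3 \<Lambda>d R3 :: real
  assumes S3: "p12 = p14 - (a/2) *\<^sub>R gV0 + Jt0 *v l12"
    and S6: "p34 = p12 - (a/2) *\<^sub>R gV1 + Jt1 *v l34"
    and u: "u = Mi *v p12"
    and K0: "\<And>v. K0 *v (G0 *v v) = v" "\<And>v. G0 *v (K0 *v v) = v"
    and K1: "\<And>v. K1 *v (G1 *v v) = v"
    and \<kappa>: "\<And>v. norm (K1 *v v) \<le> \<kappa> * norm v"
    and LG: "\<And>v. norm (G1 *v v - G0 *v v) \<le> LG * nd * norm v"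
    and nd: "0 \<le> nd" "nd \<le> U * a" and a: "0 < a"
    and pos: "0 \<le> \<kappa>" "0 \<le> LG" "0 \<le> U" "0 \<le> BJ" "0 \<le> BV" "0 \<le> C2" "0 \<le> LJ" "0 \<le> LV" "0 \<le> LH"
      "0 \<le> \<Lambda>1" "0 \<le> \<Lambda>3" "0 \<le> \<Lambda>d"
    and uU: "norm u \<le> U"
    and BJ: "mn Jt0 \<le> BJ" "mn Jt1 \<le> BJ" and BV: "norm gV0 \<le> BV" "norm gV1 \<le> BV"
    and LJ: "mn (Jt1 - Jt0) \<le> LJ * nd" and LV: "norm (gV1 - gV0) \<le> LV * nd"
    and Hb: "\<And>v w. norm (HB v w) \<le> C2 * norm v * norm w" "\<And>v w. norm (HA v w) \<le> C2 * norm v * norm w"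
    and LH: "\<And>v w. norm (HB v w - HA v w) \<le> LH * nd * norm v * norm w"
    and H0l: "\<And>v v' w. HA (v + v') w = HA v w + HA v' w" "\<And>v w w'. HA v (w + w') = HA v w + HA v w'"
    and H1l: "\<And>v v' w. HB (v + v') w = HB v w + HB v' w" "\<And>v w w'. HB v (w + w') = HB v w + HB v w'"
      "\<And>v v' w. HB (v - v') w = HB v w - HB v' w" "\<And>v w w'. HB v (w - w') = HB v w - HB v w'"
    and L12: "norm l12 \<le> \<Lambda>1 * a" and L34: "norm l34 \<le> \<Lambda>3 * a" and Ld: "norm (l34 - l12) \<le> \<Lambda>d * a^2"
    and C3: "norm (l12 + l34 - (a/2) *\<^sub>R ((K0 *v (J0 *v (Mi *v gV0)) - K0 *v HA u u)
           + (K1 *v (J1 *v (Mi *v gV1)) - K1 *v HB u u))) \<le> R3 * a^3"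
  shows "norm (l12 + l34 - (a/2) *\<^sub>R ((K0 *v (J0 *v (Mi *v gV0)) - K0 *v HA (Mi *v p14) (Mi *v p14))
           + (K1 *v (J1 *v (Mi *v gV1)) - K1 *v HB (Mi *v p34) (Mi *v p34))))
      \<le> (R3 + (\<kappa> * 2 * LH * U * U * (mn Mi * (BV/2 + BJ * \<Lambda>1))
         + \<kappa> * LG * U * mn K0 * (2 * C2 * U * (mn Mi * (BV/2 + BJ * \<Lambda>1)))
         + mn K0 * C2 * (mn Mi * (BV/2 + BJ * \<Lambda>1)) * (mn Mi * (BV/2 + BJ * \<Lambda>1))
         + \<kappa> * 2 * C2 * U * (mn Mi * (LV * U / 2 + LJ * U * \<Lambda>3 + BJ * \<Lambda>d))
         + \<kappa> * C2 * (mn Mi * (BJ * \<Lambda>3 + BV/2)) * (mn Mi * (BJ * \<Lambda>3 + BV/2))) / 2) * a^3"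
proof -
  define E1 where "E1 = mn Mi * (BV/2 + BJ * \<Lambda>1)"
  define E3 where "E3 = mn Mi * (BJ * \<Lambda>3 + BV/2)"
  define Ee where "Ee = mn Mi * (LV * U / 2 + LJ * U * \<Lambda>3 + BJ * \<Lambda>d)"
  have E0: "0 \<le> E1" "0 \<le> E3" "0 \<le> Ee" using pos mn_nonneg[of Mi] by (simp_all add: E1_def E3_def Ee_def)
  define e1 where "e1 = Mi *v ((a/2) *\<^sub>R gV0 - Jt0 *v l12)"
  define e3 where "e3 = Mi *v (Jt1 *v l34 - (a/2) *\<^sub>R gV1)"
  define \<epsilon> where "\<epsilon> = e1 + e3"
  have w1: "Mi *v p14 = u + e1"
  proof -
    have "p14 = p12 + ((a/2) *\<^sub>R gV0 - Jt0 *v l12)" using S3 by (simp add: algebra_simps)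
    then have "Mi *v p14 = Mi *v (p12 + ((a/2) *\<^sub>R gV0 - Jt0 *v l12))" by simp
    also have "\<dots> = Mi *v p12 + Mi *v ((a/2) *\<^sub>R gV0 - Jt0 *v l12)" by (rule matrix_vector_right_distrib)
    finally show ?thesis by (simp only: u e1_def)
  qed
  have w3: "Mi *v p34 = u + e3"
  proof -
    have "p34 = p12 + (Jt1 *v l34 - (a/2) *\<^sub>R gV1)" using S6 by (simp add: algebra_simps)
    then have "Mi *v p34 = Mi *v (p12 + (Jt1 *v l34 - (a/2) *\<^sub>R gV1))" by simp
    also have "\<dots> = Mi *v p12 + Mi *v (Jt1 *v l34 - (a/2) *\<^sub>R gV1)" by (rule matrix_vector_right_distrib)
    finally show ?thesis by (simp only: u e3_def)
  qed
  have ne1: "norm e1 \<le> E1 * a"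
  proof -
    have "norm ((a/2) *\<^sub>R gV0 - Jt0 *v l12) \<le> (a/2) * BV + BJ * (\<Lambda>1 * a)"
    proof -
      have "norm ((a/2) *\<^sub>R gV0) \<le> (a/2) * BV" using BV a by (simp add: mult_left_mono)
      moreover have "norm (Jt0 *v l12) \<le> BJ * (\<Lambda>1 * a)"
        using mn_mv[of Jt0 l12] mm3[of 1 "mn Jt0" BJ "norm l12" "\<Lambda>1 * a"] BJ L12 mn_nonneg[of Jt0] by simp
      ultimately show ?thesis using norm_triangle_ineq4[of "(a/2) *\<^sub>R gV0" "Jt0 *v l12"] by linarith
    qed
    then have "mn Mi * norm ((a/2) *\<^sub>R gV0 - Jt0 *v l12) \<le> mn Mi * ((a/2) * BV + BJ * (\<Lambda>1 * a))"
      by (rule mult_left_mono[OF _ mn_nonneg])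
    moreover have "mn Mi * ((a/2) * BV + BJ * (\<Lambda>1 * a)) = E1 * a" by (simp add: E1_def algebra_simps)
    ultimately show ?thesis unfolding e1_def using mn_mv[of Mi "(a/2) *\<^sub>R gV0 - Jt0 *v l12"] by linarith
  qed
  have ne3: "norm e3 \<le> E3 * a"
  proof -
    have "norm (Jt1 *v l34 - (a/2) *\<^sub>R gV1) \<le> BJ * (\<Lambda>3 * a) + (a/2) * BV"
    proof -
      have "norm ((a/2) *\<^sub>R gV1) \<le> (a/2) * BV" using BV a by (simp add: mult_left_mono)
      moreover have "norm (Jt1 *v l34) \<le> BJ * (\<Lambda>3 * a)"
        using mn_mv[of Jt1 l34] mm3[of 1 "mn Jt1" BJ "norm l34" "\<Lambda>3 * a"] BJ L34 mn_nonneg[of Jt1] by simp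
      ultimately show ?thesis using norm_triangle_ineq4[of "Jt1 *v l34" "(a/2) *\<^sub>R gV1"] by linarith
    qed
    then have "mn Mi * norm (Jt1 *v l34 - (a/2) *\<^sub>R gV1) \<le> mn Mi * (BJ * (\<Lambda>3 * a) + (a/2) * BV)"
      by (rule mult_left_mono[OF _ mn_nonneg])
    moreover have "mn Mi * (BJ * (\<Lambda>3 * a) + (a/2) * BV) = E3 * a" by (simp add: E3_def algebra_simps)
    ultimately show ?thesis unfolding e3_def using mn_mv[of Mi "Jt1 *v l34 - (a/2) *\<^sub>R gV1"] by linarith
  qed
  have neps: "norm \<epsilon> \<le> Ee * a^2"
  proof -
    have eq: "\<epsilon> = Mi *v ((a/2) *\<^sub>R (gV0 - gV1) + (Jt1 - Jt0) *v l34 + Jt0 *v (l34 - l12))"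
      by (simp add: \<epsilon>_def e1_def e3_def algebra_simps)
    have b1: "norm ((a/2) *\<^sub>R (gV0 - gV1)) \<le> (LV * U / 2) * a^2"
    proof -
      have "LV * nd \<le> LV * (U * a)" using nd pos by (intro mult_left_mono) auto
      then have "norm (gV0 - gV1) \<le> LV * (U * a)"
        using LV by (simp add: norm_minus_commute)
      then have "(a/2) * norm (gV0 - gV1) \<le> (a/2) * (LV * (U * a))" using a by (simp add: mult_left_mono)
      then show ?thesis using a by (simp add: power2_eq_square mult_ac)
    qed
    have b2: "norm ((Jt1 - Jt0) *v l34) \<le> (LJ * U * \<Lambda>3) * a^2"
    proof -
      have "LJ * nd \<le> LJ * (U * a)" using nd pos by (intro mult_left_mono) auto
      then have "mn (Jt1 - Jt0) \<le> LJ * (U * a)" using LJ by linarith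
      then have "mn (Jt1 - Jt0) * norm l34 \<le> LJ * (U * a) * (\<Lambda>3 * a)"
        using L34 pos a mn_nonneg[of "Jt1 - Jt0"] by (intro mult_mono) auto
      then show ?thesis using mn_mv[of "Jt1 - Jt0" l34] by (simp add: power2_eq_square mult_ac)
    qed
    have b3: "norm (Jt0 *v (l34 - l12)) \<le> (BJ * \<Lambda>d) * a^2"
    proof -
      have "mn Jt0 * norm (l34 - l12) \<le> BJ * (\<Lambda>d * a^2)"
        using Ld BJ(1) pos mn_nonneg[of Jt0] by (intro mult_mono) auto
      then show ?thesis using mn_mv[of Jt0 "l34 - l12"] by (simp add: mult_ac)
    qed
    have "norm ((a/2) *\<^sub>R (gV0 - gV1) + (Jt1 - Jt0) *v l34 + Jt0 *v (l34 - l12)) \<le> (LV * U / 2 + LJ * U * \<Lambda>3 + BJ * \<Lambda>d) * a^2"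
      using norm_triangle_ineq[of "(a/2) *\<^sub>R (gV0 - gV1) + (Jt1 - Jt0) *v l34" "Jt0 *v (l34 - l12)"]
        norm_triangle_ineq[of "(a/2) *\<^sub>R (gV0 - gV1)" "(Jt1 - Jt0) *v l34"] b1 b2 b3
      by (simp add: algebra_simps)
    then have "mn Mi * norm ((a/2) *\<^sub>R (gV0 - gV1) + (Jt1 - Jt0) *v l34 + Jt0 *v (l34 - l12)) \<le> mn Mi * ((LV * U / 2 + LJ * U * \<Lambda>3 + BJ * \<Lambda>d) * a^2)"
      by (rule mult_left_mono[OF _ mn_nonneg])
    then show ?thesis unfolding eq using mn_mv[of Mi "(a/2) *\<^sub>R (gV0 - gV1) + (Jt1 - Jt0) *v l34 + Jt0 *v (l34 - l12)"]
      by (simp add: Ee_def mult_ac)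
  qed
  define S0 where "S0 = HA u e1 + HA e1 u"
  define S1 where "S1 = HB u e1 + HB e1 u"
  define Se where "Se = HB u \<epsilon> + HB \<epsilon> u"
  define z where "z = K0 *v S0"
  have x1: "HA (Mi *v p14) (Mi *v p14) - HA u u = S0 + HA e1 e1"
    unfolding w1 S0_def by (simp add: H0l algebra_simps)
  have e3e: "e3 = \<epsilon> - e1" by (simp add: \<epsilon>_def)
  have x3: "HB (Mi *v p34) (Mi *v p34) - HB u u = Se - S1 + HB e3 e3"
  proof -
    have "HB (Mi *v p34) (Mi *v p34) - HB u u = HB u e3 + HB e3 u + HB e3 e3"
      unfolding w3 by (simp add: H1l algebra_simps)
    also have "HB u e3 = HB u \<epsilon> - HB u e1" unfolding e3e by (rule H1l(4))
    also have "HB e3 u = HB \<epsilon> u - HB e1 u" unfolding e3e by (rule H1l(3))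
    finally show ?thesis by (simp add: Se_def S1_def algebra_simps)
  qed
  have ez: "K1 *v S0 - K0 *v S0 = K1 *v (G0 *v z - G1 *v z)"
    by (simp add: z_def K0 K1 matrix_vector_mult_diff_distrib)
  have eqD: "l12 + l34 - (a/2) *\<^sub>R ((K0 *v (J0 *v (Mi *v gV0)) - K0 *v HA (Mi *v p14) (Mi *v p14))
           + (K1 *v (J1 *v (Mi *v gV1)) - K1 *v HB (Mi *v p34) (Mi *v p34)))
      = (l12 + l34 - (a/2) *\<^sub>R ((K0 *v (J0 *v (Mi *v gV0)) - K0 *v HA u u)
           + (K1 *v (J1 *v (Mi *v gV1)) - K1 *v HB u u)))
        + (a/2) *\<^sub>R (K0 *v (HA (Mi *v p14) (Mi *v p14) - HA u u) + K1 *v (HB (Mi *v p34) (Mi *v p34) - HB u u))"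
    by (simp add: algebra_simps)
  have eqX: "K0 *v (HA (Mi *v p14) (Mi *v p14) - HA u u) + K1 *v (HB (Mi *v p34) (Mi *v p34) - HB u u)
     = K0 *v HA e1 e1 + K1 *v Se + K1 *v HB e3 e3 - K1 *v (S1 - S0) - K1 *v (G0 *v z - G1 *v z)"
    unfolding x1 x3 using ez by (simp add: algebra_simps)
  have nuu: "0 \<le> norm u" by simp
  have bS0: "norm S0 \<le> 2 * C2 * U * E1 * a"
  proof -
    have "norm (HA u e1) \<le> C2 * U * (E1 * a)" using Hb(2)[of u e1] mm3[OF pos(6) nuu uU _ ne1] by simp
    moreover have "norm (HA e1 u) \<le> C2 * (E1 * a) * U" using Hb(2)[of e1 u] mm3[OF pos(6) _ ne1 nuu uU] by simp
    ultimately show ?thesis unfolding S0_def using norm_triangle_ineq[of "HA u e1" "HA e1 u"] by (simp add: algebra_simps)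
  qed
  have bS10: "norm (S1 - S0) \<le> 2 * LH * U * U * E1 * a^2"
  proof -
    have LH0: "0 \<le> LH * nd" using pos nd by simp
    have "norm (HB u e1 - HA u e1) \<le> LH * nd * U * (E1 * a)" using LH[of u e1] mm3[OF LH0 nuu uU _ ne1] by simp
    also have "\<dots> \<le> LH * (U * a) * U * (E1 * a)"
      using nd pos E0 a by (intro mult_right_mono mult_left_mono) auto
    finally have t1: "norm (HB u e1 - HA u e1) \<le> LH * U * U * E1 * a^2" by (simp add: power2_eq_square mult_ac)
    have "norm (HB e1 u - HA e1 u) \<le> LH * nd * (E1 * a) * U" using LH[of e1 u] mm3[OF LH0 _ ne1 nuu uU] by simp
    also have "\<dots> \<le> LH * (U * a) * (E1 * a) * U"
      using nd pos E0 a by (intro mult_right_mono mult_left_mono) auto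
    finally have t2: "norm (HB e1 u - HA e1 u) \<le> LH * U * U * E1 * a^2" by (simp add: power2_eq_square mult_ac)
    have "S1 - S0 = (HB u e1 - HA u e1) + (HB e1 u - HA e1 u)" by (simp add: S0_def S1_def)
    then show ?thesis using norm_triangle_ineq[of "HB u e1 - HA u e1" "HB e1 u - HA e1 u"] t1 t2 by simp
  qed
  have bSe: "norm Se \<le> 2 * C2 * U * Ee * a^2"
  proof -
    have "norm (HB u \<epsilon>) \<le> C2 * U * (Ee * a^2)" using Hb(1)[of u \<epsilon>] mm3[OF pos(6) nuu uU _ neps] by simp
    moreover have "norm (HB \<epsilon> u) \<le> C2 * (Ee * a^2) * U" using Hb(1)[of \<epsilon> u] mm3[OF pos(6) _ neps nuu uU] by simp
    ultimately show ?thesis unfolding Se_def using norm_triangle_ineq[of "HB u \<epsilon>" "HB \<epsilon> u"] by (simp add: algebra_simps)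
  qed
  have bQ0: "norm (HA e1 e1) \<le> C2 * E1 * E1 * a^2"
    using Hb(2)[of e1 e1] mm3[OF pos(6) _ ne1 _ ne1] by (simp add: power2_eq_square mult_ac)
  have bQ1: "norm (HB e3 e3) \<le> C2 * E3 * E3 * a^2"
    using Hb(1)[of e3 e3] mm3[OF pos(6) _ ne3 _ ne3] by (simp add: power2_eq_square mult_ac)
  define Dc where "Dc = \<kappa> * 2 * LH * U * U * E1 + \<kappa> * LG * U * mn K0 * (2 * C2 * U * E1)
         + mn K0 * C2 * E1 * E1 + \<kappa> * 2 * C2 * U * Ee + \<kappa> * C2 * E3 * E3"
  have bX: "norm (K0 *v HA e1 e1 + K1 *v Se + K1 *v HB e3 e3 - K1 *v (S1 - S0) - K1 *v (G0 *v z - G1 *v z)) \<le> Dc * a^2"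
  proof -
    have k1: "norm (K0 *v HA e1 e1) \<le> mn K0 * (C2 * E1 * E1 * a^2)"
      using mn_mv[of K0 "HA e1 e1"] mult_left_mono[OF bQ0 mn_nonneg[of K0]] by linarith
    have k2: "norm (K1 *v Se) \<le> \<kappa> * (2 * C2 * U * Ee * a^2)"
      using \<kappa>[of Se] mult_left_mono[OF bSe pos(1)] by linarith
    have k3: "norm (K1 *v HB e3 e3) \<le> \<kappa> * (C2 * E3 * E3 * a^2)"
      using \<kappa>[of "HB e3 e3"] mult_left_mono[OF bQ1 pos(1)] by linarith
    have k4: "norm (K1 *v (S1 - S0)) \<le> \<kappa> * (2 * LH * U * U * E1 * a^2)"
      using \<kappa>[of "S1 - S0"] mult_left_mono[OF bS10 pos(1)] by linarith
    have k5: "norm (K1 *v (G0 *v z - G1 *v z)) \<le> \<kappa> * (LG * (U * a) * (mn K0 * (2 * C2 * U * E1 * a)))"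
    proof -
      have nz: "norm z \<le> mn K0 * (2 * C2 * U * E1 * a)"
        unfolding z_def using mn_mv[of K0 S0] mult_left_mono[OF bS0 mn_nonneg[of K0]] by linarith
      have "norm (G0 *v z - G1 *v z) \<le> LG * nd * norm z" using LG[of z] by (simp add: norm_minus_commute)
      also have "\<dots> \<le> LG * (U * a) * (mn K0 * (2 * C2 * U * E1 * a))"
        using nd pos by (intro mult_mono nz mult_left_mono) auto
      finally have "\<kappa> * norm (G0 *v z - G1 *v z) \<le> \<kappa> * (LG * (U * a) * (mn K0 * (2 * C2 * U * E1 * a)))"
        by (rule mult_left_mono[OF _ pos(1)])
      then show ?thesis using \<kappa>[of "G0 *v z - G1 *v z"] by linarith
    qed
    have tri: "norm (K0 *v HA e1 e1 + K1 *v Se + K1 *v HB e3 e3 - K1 *v (S1 - S0) - K1 *v (G0 *v z - G1 *v z))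
      \<le> norm (K0 *v HA e1 e1) + norm (K1 *v Se) + norm (K1 *v HB e3 e3) + norm (K1 *v (S1 - S0)) + norm (K1 *v (G0 *v z - G1 *v z))"
      by (rule n5)
    have "mn K0 * (C2 * E1 * E1 * a^2) + \<kappa> * (2 * C2 * U * Ee * a^2) + \<kappa> * (C2 * E3 * E3 * a^2)
       + \<kappa> * (2 * LH * U * U * E1 * a^2) + \<kappa> * (LG * (U * a) * (mn K0 * (2 * C2 * U * E1 * a))) = Dc * a^2"
      by (simp add: Dc_def algebra_simps power2_eq_square)
    then show ?thesis using tri k1 k2 k3 k4 k5 by linarith
  qed
  have "norm (l12 + l34 - (a/2) *\<^sub>R ((K0 *v (J0 *v (Mi *v gV0)) - K0 *v HA (Mi *v p14) (Mi *v p14))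
           + (K1 *v (J1 *v (Mi *v gV1)) - K1 *v HB (Mi *v p34) (Mi *v p34))))
      \<le> R3 * a^3 + (a/2) * (Dc * a^2)"
  proof -
    have "norm ((a/2) *\<^sub>R (K0 *v HA e1 e1 + K1 *v Se + K1 *v HB e3 e3 - K1 *v (S1 - S0) - K1 *v (G0 *v z - G1 *v z)))
        \<le> (a/2) * (Dc * a^2)" using bX a by (simp add: mult_left_mono)
    then show ?thesis unfolding eqD eqX using C3 norm_triangle_ineq[of "l12 + l34 - (a/2) *\<^sub>R ((K0 *v (J0 *v (Mi *v gV0)) - K0 *v HA u u)
           + (K1 *v (J1 *v (Mi *v gV1)) - K1 *v HB u u))" "(a/2) *\<^sub>R (K0 *v HA e1 e1 + K1 *v Se + K1 *v HB e3 e3 - K1 *v (S1 - S0) - K1 *v (G0 *v z - G1 *v z))"]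
      by linarith
  qed
  also have "\<dots> = (R3 + Dc / 2) * a^3" by (simp add: algebra_simps power2_eq_square power3_eq_cube)
  finally show ?thesis by (simp add: Dc_def E1_def E3_def Ee_def)
qed

lemma core_K1:
  fixes G0 G1 K0 K1 :: "real^'m^'m" and LG nd :: real
  assumes K0: "\<And>v. K0 *v (G0 *v v) = v"
    and K1: "\<And>v. G1 *v (K1 *v v) = v"
    and LG: "\<And>v. norm (G1 *v v - G0 *v v) \<le> LG * nd * norm v"
    and small: "mn K0 * (LG * nd) \<le> 1/2"
  shows "norm (K1 *v v) \<le> (2 * mn K0) * norm v"
proof -
  define w where "w = K1 *v v"
  have "norm w = norm (K0 *v (G0 *v w))" by (simp add: K0)
  also have "\<dots> \<le> mn K0 * norm (G0 *v w)" by (rule mn_mv)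
  also have "\<dots> \<le> mn K0 * (norm v + LG * nd * norm w)"
  proof (rule mult_left_mono[OF _ mn_nonneg])
    have "G0 *v w = G1 *v w - (G1 *v w - G0 *v w)" by simp
    then have "norm (G0 *v w) \<le> norm (G1 *v w) + norm (G1 *v w - G0 *v w)"
      by (metis norm_triangle_ineq4)
    moreover have "G1 *v w = v" by (simp add: w_def K1)
    ultimately show "norm (G0 *v w) \<le> norm v + LG * nd * norm w" using LG[of w] by simp
  qed
  also have "\<dots> = mn K0 * norm v + (mn K0 * (LG * nd)) * norm w" by (simp add: algebra_simps)
  finally have "norm w \<le> mn K0 * norm v + (mn K0 * (LG * nd)) * norm w" .
  then have "norm w \<le> 2 * (mn K0 * norm v)" by (rule absorb[OF _ small norm_ge_zero])
  then show ?thesis by (simp add: w_def mult_ac)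
qed

lemma G_lip:
  fixes J0 J1 :: "real^'n^'m" and Jt0 Jt1 :: "real^'m^'n" and Mi :: "real^'n^'n" and G0 G1 :: "real^'m^'m"
    and BJ LJ nd :: real
  assumes G0: "\<And>v. G0 *v v = J0 *v (Mi *v (Jt0 *v v))"
    and G1: "\<And>v. G1 *v v = J1 *v (Mi *v (Jt1 *v v))"
    and BJ: "mn J0 \<le> BJ" "mn Jt1 \<le> BJ"
    and LJ: "mn (J1 - J0) \<le> LJ * nd" "mn (Jt1 - Jt0) \<le> LJ * nd"
    and pos: "0 \<le> BJ" "0 \<le> LJ" "0 \<le> nd"
  shows "norm (G1 *v v - G0 *v v) \<le> (2 * LJ * mn Mi * BJ) * nd * norm v"
proof -
  have eq: "G1 *v v - G0 *v v = (J1 - J0) *v (Mi *v (Jt1 *v v)) + J0 *v (Mi *v ((Jt1 - Jt0) *v v))"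
    by (simp add: G0 G1 algebra_simps)
  have n1: "norm ((J1 - J0) *v (Mi *v (Jt1 *v v))) \<le> (LJ * nd) * (mn Mi * (BJ * norm v))"
  proof -
    have "norm (Mi *v (Jt1 *v v)) \<le> mn Mi * (BJ * norm v)"
      using mn_mv[of Mi "Jt1 *v v"] mn_mv[of Jt1 v] BJ(2) mn_nonneg[of Mi]
      by (meson mult_left_mono mult_right_mono norm_ge_zero order_trans)
    then show ?thesis using mn_mv[of "J1 - J0" "Mi *v (Jt1 *v v)"] LJ(1) mn_nonneg[of "J1 - J0"]
      by (meson mult_mono norm_ge_zero order_trans)
  qed
  have n2: "norm (J0 *v (Mi *v ((Jt1 - Jt0) *v v))) \<le> BJ * (mn Mi * ((LJ * nd) * norm v))"
  proof -
    have "norm (Mi *v ((Jt1 - Jt0) *v v)) \<le> mn Mi * ((LJ * nd) * norm v)"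
      using mn_mv[of Mi "(Jt1 - Jt0) *v v"] mn_mv[of "Jt1 - Jt0" v] LJ(2) mn_nonneg[of Mi]
      by (meson mult_left_mono mult_right_mono norm_ge_zero order_trans)
    then show ?thesis using mn_mv[of J0 "Mi *v ((Jt1 - Jt0) *v v)"] BJ(1) mn_nonneg[of J0]
      by (meson mult_mono norm_ge_zero order_trans)
  qed
  have "norm (G1 *v v - G0 *v v) \<le> (LJ * nd) * (mn Mi * (BJ * norm v)) + BJ * (mn Mi * ((LJ * nd) * norm v))"
    unfolding eq using norm_triangle_ineq n1 n2 by (smt (verit))
  then show ?thesis by (simp add: algebra_simps)
qed

lemma ev_small: "(0::real) < b \<Longrightarrow> \<forall>\<^sub>F a in at_right 0. 0 < a \<and> a \<le> b"
  unfolding eventually_at_right_field by (intro exI[of _ b]) auto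

lemma transpose_diff': "transpose (A - B) = transpose A - transpose (B::real^'n^'m)"
  by (simp add: transpose_def vec_eq_iff)

lemma gV_bounds:
  fixes V :: "real^'n \<Rightarrow> real"
  assumes f: "smooth_map V" and K: "compact K" "convex K"
  shows "\<exists>BV LV. 0 \<le> BV \<and> 0 \<le> LV \<and> (\<forall>y\<in>K. norm (grad_V V y) \<le> BV)
     \<and> (\<forall>y\<in>K. \<forall>y'\<in>K. norm (grad_V V y' - grad_V V y) \<le> LV * norm (y' - y))"
proof -
  obtain C where C: "C \<ge> 0" "\<forall>y\<in>K. \<forall>ws. length ws = 1 \<longrightarrow> norm (Dl ws V y) \<le> C * prod_list (map norm ws)"
    using Dl_bound[OF f K(1), of 1] by blast
  obtain L where L: "L \<ge> 0" "\<forall>ws y y'. length ws = 1 \<longrightarrow> y \<in> K \<longrightarrow> y' \<in> K \<longrightarrow>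
     norm (Dl ws V y' - Dl ws V y) \<le> L * prod_list (map norm ws) * norm (y' - y)"
    using lip_Dl[OF f K, of 1] by blast
  show ?thesis
  proof (intro exI conjI ballI)
    fix y assume y: "y \<in> K"
    have "norm (grad_V V y) \<le> (\<Sum>j\<in>UNIV. \<bar>grad_V V y $ j\<bar>)" by (rule norm_le_l1_cart)
    also have "\<dots> \<le> (\<Sum>j\<in>(UNIV::'n set). C)"
    proof (rule sum_mono)
      fix j
      show "\<bar>grad_V V y $ j\<bar> \<le> C" using C(2)[rule_format, OF y, of "[axis j 1]"] by (simp add: gV_entry)
    qed
    finally show "norm (grad_V V y) \<le> real CARD('n) * C" by simp
    fix y' assume y': "y' \<in> K"
    have "norm (grad_V V y' - grad_V V y) \<le> (\<Sum>j\<in>UNIV. \<bar>(grad_V V y' - grad_V V y) $ j\<bar>)" by (rule norm_le_l1_cart)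
    also have "\<dots> \<le> (\<Sum>j\<in>(UNIV::'n set). L * norm (y' - y))"
    proof (rule sum_mono)
      fix j
      show "\<bar>(grad_V V y' - grad_V V y) $ j\<bar> \<le> L * norm (y' - y)"
        using L(2)[rule_format, of "[axis j 1]" y y'] y y' by (simp add: gV_entry)
    qed
    finally show "norm (grad_V V y' - grad_V V y) \<le> (real CARD('n) * L) * norm (y' - y)" by simp
  qed (use C L in auto)
qed

lemma vec_comb:
  fixes A0 B0 A1 B1 X3 :: "'a::real_normed_vector"
  assumes "norm (A0 + (1/2) *\<^sub>R B0) \<le> t3" "norm (A1 - (A0 + B0)) \<le> t12" "norm (B1 - B0) \<le> t21"
  shows "norm (- A1 + (1/2) *\<^sub>R B1) \<le> t3 + t12 + t21 / 2"
proof -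
  have "- A1 + (1/2) *\<^sub>R B1 = - (A0 + (1/2) *\<^sub>R B0) - (A1 - (A0 + B0)) + (1/2) *\<^sub>R (B1 - B0)"
    by (simp add: algebra_simps, simp add: scaleR_add_left[symmetric])
  then have "norm (- A1 + (1/2) *\<^sub>R B1) \<le> norm (A0 + (1/2) *\<^sub>R B0) + norm (A1 - (A0 + B0)) + norm ((1/2) *\<^sub>R (B1 - B0))"
    using norm_triangle_ineq[of "- (A0 + (1/2) *\<^sub>R B0) - (A1 - (A0 + B0))" "(1/2) *\<^sub>R (B1 - B0)"]
      norm_triangle_ineq4[of "- (A0 + (1/2) *\<^sub>R B0)" "A1 - (A0 + B0)"]
    by (simp only: norm_minus_cancel)
  then show ?thesis using assms by simp
qed

lemma vec_comb2:
  fixes A0 B0 A1 B1 X3 :: "'a::real_normed_vector"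
  assumes "norm (A1 - (A0 + B0 + (1/2) *\<^sub>R X3)) \<le> t13" "norm (B1 - (B0 + X3)) \<le> t22"
  shows "norm ((A0 + (1/2) *\<^sub>R B0) + (- A1 + (1/2) *\<^sub>R B1)) \<le> t13 + t22 / 2"
proof -
  have "(A0 + (1/2) *\<^sub>R B0) + (- A1 + (1/2) *\<^sub>R B1) = - (A1 - (A0 + B0 + (1/2) *\<^sub>R X3)) + (1/2) *\<^sub>R (B1 - (B0 + X3))"
    by (simp add: algebra_simps, simp add: scaleR_add_left[symmetric])
  then have "norm ((A0 + (1/2) *\<^sub>R B0) + (- A1 + (1/2) *\<^sub>R B1)) \<le> norm (A1 - (A0 + B0 + (1/2) *\<^sub>R X3)) + norm ((1/2) *\<^sub>R (B1 - (B0 + X3)))"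
    using norm_triangle_ineq[of "- (A1 - (A0 + B0 + (1/2) *\<^sub>R X3))" "(1/2) *\<^sub>R (B1 - (B0 + X3))"]
    by (simp only: norm_minus_cancel)
  then show ?thesis using assms by simp
qed

lemma div_a:
  fixes a x c :: real
  assumes "0 < a" "a * x \<le> c * a ^ Suc k"
  shows "x \<le> c * a ^ k"
proof -
  have "a * x \<le> a * (c * a ^ k)" using assms(2) by (simp add: mult_ac)
  then show ?thesis using assms(1) by simp
qed

theorem mainTheorem7:
  fixes N :: nat
    and M \<gamma> \<sigma> :: "real^'n^'n"
    and \<beta> :: real and z :: "real^'m"
    and \<xi> :: "real^'n \<Rightarrow> real^'m" and V :: "real^'n \<Rightarrow> real"
    and qn pn Gn Gh :: "real^'n"
    and p14 p12 q1 p34 p1 :: "real \<Rightarrow> real^'n"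
    and lam14 lam12 lam34 lam1 :: "real \<Rightarrow> real^'m"
  assumes dim: "CARD('n) = 3 * N"
    and M_sym: "transpose M = M"
    and M_pd: "\<forall>x. x \<noteq> 0 \<longrightarrow> x \<bullet> (M *v x) > 0"
    and beta: "\<beta> > 0"
    and fdt: "\<sigma> ** transpose \<sigma> = (2 / \<beta>) *\<^sub>R \<gamma>"
    and V_smooth: "smooth_map V"
    and xi_smooth: "smooth_map \<xi>"
    and G_inv: "\<forall>q. \<xi> q = z \<longrightarrow> invertible (G_M M \<xi> q)"
    and qn_on: "\<xi> qn = z"
    and scheme: "\<forall>\<^sub>F dt in at_right 0.
         p14 dt = pn - (dt / 4) *\<^sub>R ((\<gamma> ** matrix_inv M) *v (pn + p14 dt))
                  + sqrt (dt / 2) *\<^sub>R (\<sigma> *v Gn) + grad_xi \<xi> qn *v lam14 dt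
       \<and> transpose (grad_xi \<xi> qn) *v (matrix_inv M *v p14 dt) = 0
       \<and> p12 dt = p14 dt - (dt / 2) *\<^sub>R grad_V V qn + grad_xi \<xi> qn *v lam12 dt
       \<and> q1 dt = qn + dt *\<^sub>R (matrix_inv M *v p12 dt)
       \<and> \<xi> (q1 dt) = z
       \<and> p34 dt = p12 dt - (dt / 2) *\<^sub>R grad_V V (q1 dt) + grad_xi \<xi> (q1 dt) *v lam34 dt
       \<and> transpose (grad_xi \<xi> (q1 dt)) *v (matrix_inv M *v p34 dt) = 0
       \<and> p1 dt = p34 dt - (dt / 4) *\<^sub>R ((\<gamma> ** matrix_inv M) *v (p34 dt + p1 dt))
                  + sqrt (dt / 2) *\<^sub>R (\<sigma> *v Gh) + grad_xi \<xi> (q1 dt) *v lam1 dt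
       \<and> transpose (grad_xi \<xi> (q1 dt)) *v (matrix_inv M *v p1 dt) = 0"
    and branch: "(q1 \<longlongrightarrow> qn) (at_right 0)"
  shows "(\<exists>C. \<forall>\<^sub>F dt in at_right 0.
            norm (lam12 dt - (dt / 2) *\<^sub>R f_rgd M \<xi> V qn (p12 dt)) \<le> C * dt ^ 2)
       \<and> (\<exists>C. \<forall>\<^sub>F dt in at_right 0.
            norm (lam34 dt - (dt / 2) *\<^sub>R f_rgd M \<xi> V (q1 dt) (p12 dt)) \<le> C * dt ^ 2)
       \<and> (\<exists>C. \<forall>\<^sub>F dt in at_right 0.
            norm (lam12 dt + lam34 dt - (dt / 2) *\<^sub>R
                   (f_rgd M \<xi> V qn (p12 dt) + f_rgd M \<xi> V (q1 dt) (p12 dt))) \<le> C * dt ^ 3)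
       \<and> (\<exists>C. \<forall>\<^sub>F dt in at_right 0.
            norm (lam12 dt + lam34 dt - (dt / 2) *\<^sub>R
                   (f_rgd M \<xi> V qn (p14 dt) + f_rgd M \<xi> V (q1 dt) (p34 dt))) \<le> C * dt ^ 3)"
proof -
  define K where "K = cball qn (1::real)"
  have Kc: "compact K" "convex K" "qn \<in> K" by (auto simp: K_def)
  define Mi where "Mi = matrix_inv M"
  define J where "J y = jacobian \<xi> (at y)" for y
  define Jt where "Jt y = grad_xi \<xi> y" for y
  define G where "G y = G_M M \<xi> y" for y
  define Ki where "Ki y = matrix_inv (G y)" for y
  define H where "H y v w = hess_xi \<xi> y v w" for y v w
  define gV where "gV y = grad_V V y" for y
  have tJt': "transpose (grad_xi \<xi> y) = J y" for y by (simp add: grad_xi_def J_def)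
  have JtJ: "Jt y = transpose (J y)" for y by (simp add: Jt_def J_def grad_xi_def)
  have Gform: "G y = J y ** Mi ** Jt y" for y
    unfolding G_def G_M_def Mi_def Jt_def tJt' ..
  have Gact: "G y *v v = J y *v (Mi *v (Jt y *v v))" for y v
    unfolding Gform by (simp add: matrix_vector_mul_assoc matrix_mul_assoc)
  have frgd: "f_rgd M \<xi> V y p = Ki y *v (J y *v (Mi *v gV y)) - Ki y *v H y (Mi *v p) (Mi *v p)" for y p
    unfolding f_rgd_def tJt' Ki_def G_def gV_def H_def Mi_def ..
  have Hdl: "H y v w = Dl [w, v] \<xi> y" for y v w
    by (simp add: H_def hess_Dl[OF xi_smooth])
  have Jdl: "J y *v v = Dl [v] \<xi> y" for y v
    by (simp add: J_def jac_Dl[OF xi_smooth])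
  have Hlin: "H y (v + v') w = H y v w + H y v' w" "H y v (w + w') = H y v w + H y v w'"
    "H y (v - v') w = H y v w - H y v' w" "H y v (w - w') = H y v w - H y v w'" for y v v' w w'
    by (simp_all only: Hdl Dl_2_add1[OF xi_smooth] Dl_2_add2[OF xi_smooth] Dl_2_diff1[OF xi_smooth] Dl_2_diff2[OF xi_smooth])
  have Ginv: "\<xi> y = z \<Longrightarrow> Ki y *v (G y *v v) = v \<and> G y *v (Ki y *v v) = v" for y v
    using G_inv inv_props unfolding Ki_def G_def by blast
  obtain BJ LJ where BJ: "0 \<le> BJ" "0 \<le> LJ" "\<And>y. y \<in> K \<Longrightarrow> mn (J y) \<le> BJ"
    and LJ: "\<And>y y'. y \<in> K \<Longrightarrow> y' \<in> K \<Longrightarrow> mn (J y' - J y) \<le> LJ * norm (y' - y)"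
    using jac_bounds[OF xi_smooth Kc(1,2)] unfolding J_def by blast
  obtain BV LV where BV: "0 \<le> BV" "0 \<le> LV" "\<And>y. y \<in> K \<Longrightarrow> norm (gV y) \<le> BV"
    and LV: "\<And>y y'. y \<in> K \<Longrightarrow> y' \<in> K \<Longrightarrow> norm (gV y' - gV y) \<le> LV * norm (y' - y)"
    using gV_bounds[OF V_smooth Kc(1,2)] unfolding gV_def by blast
  obtain C2 where C2: "C2 \<ge> 0" "\<forall>y\<in>K. \<forall>ws. length ws = 2 \<longrightarrow> norm (Dl ws \<xi> y) \<le> C2 * prod_list (map norm ws)"
    using Dl_bound[OF xi_smooth Kc(1), of 2] by blast
  obtain C3 where C3: "C3 \<ge> 0" "\<forall>y\<in>K. \<forall>ws. length ws = 3 \<longrightarrow> norm (Dl ws \<xi> y) \<le> C3 * prod_list (map norm ws)"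
    using Dl_bound[OF xi_smooth Kc(1), of 3] by blast
  obtain C4 where C4: "C4 \<ge> 0" "\<forall>y\<in>K. \<forall>ws. length ws = 4 \<longrightarrow> norm (Dl ws \<xi> y) \<le> C4 * prod_list (map norm ws)"
    using Dl_bound[OF xi_smooth Kc(1), of 4] by blast
  obtain LH where LH: "LH \<ge> 0" "\<forall>ws y y'. length ws = 2 \<longrightarrow> y \<in> K \<longrightarrow> y' \<in> K \<longrightarrow>
     norm (Dl ws \<xi> y' - Dl ws \<xi> y) \<le> LH * prod_list (map norm ws) * norm (y' - y)"
    using lip_Dl[OF xi_smooth Kc(1,2), of 2] by blast
  have Hb: "y \<in> K \<Longrightarrow> norm (H y v w) \<le> C2 * norm v * norm w" for y v w
    using C2(2)[rule_format, of y "[w, v]"] by (simp only: Hdl) (simp add: mult_ac)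
  have LHb: "y \<in> K \<Longrightarrow> y' \<in> K \<Longrightarrow> norm (H y' v w - H y v w) \<le> LH * norm (y' - y) * norm v * norm w" for y y' v w
    using LH(2)[rule_format, of "[w, v]" y y'] by (simp only: Hdl) (simp add: mult_ac)
  define Dm where "Dm = real DIM(real^'m)"
  have Dm0: "0 \<le> Dm" by (simp add: Dm_def)
  define Lm where "Lm = \<gamma> ** Mi"
  define cb where "cb = norm (\<sigma> *v Gn)"
  define mMi where "mMi = mn Mi"
  define mK0 where "mK0 = mn (Ki qn)"
  define mJ0 where "mJ0 = mn (J qn)"
  define mJt0 where "mJt0 = mn (Jt qn)"
  define A1 where "A1 = mn Lm / 4 + mJt0 * mK0 * (mJ0 * mMi) * mn Lm / 4"
  define P where "P = 2 * (norm pn + mn Lm * norm pn / 4 + cb + mJt0 * mK0 * (mJ0 * mMi) * norm pn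
      + mJt0 * mK0 * (mJ0 * mMi) * mn Lm * norm pn / 4 + mJt0 * mK0 * (mJ0 * mMi) * cb)"
  define a0 where "a0 = 1 / (2 * A1 + 2)"
  define Q where "Q = Dm * C2 / 2"
  define LG where "LG = 2 * LJ * mMi * BJ"
  define \<rho> where "\<rho> = 1 / (1 + 2 * (mK0 * Q * mMi * mJt0) + 2 * (mK0 * LG))"
  define \<Lambda>b where "\<Lambda>b = 2 * (mK0 * (Q * \<rho> * mMi * (P + BV)) + mK0 * norm (J qn *v (Mi *v gV qn)))"
  define U where "U = mMi * (P + BV + mJt0 * \<Lambda>b)"
  define \<kappa> where "\<kappa> = 2 * mK0"
  define R1 where "R1 = Dm * C3 * U^3 / 6"
  define R2 where "R2 = Dm * C3 * U^3 * 7 / 6"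
  define R3 where "R3 = Dm * C4 * U^4 * 5 / 12"
  define c1 where "c1 = mK0 * R1"
  define c2 where "c2 = \<kappa> * R2"
  define c3 where "c3 = mK0 * R3 + \<kappa> * LG * U * mK0 * R2"
  define \<Lambda>1 where "\<Lambda>1 = mK0 * (Q * U * U + BJ * mMi * BV / 2)"
  define \<Lambda>3 where "\<Lambda>3 = \<kappa> * (R2 + C2 * U * U / 2 + BJ * mMi * BV / 2)"
  define \<Lambda>d where "\<Lambda>d = (c2 + c1 + (\<kappa> * ((LJ * mMi * BV + BJ * mMi * LV + LH * U * U) * U)
            + \<kappa> * LG * U * mK0 * (BJ * mMi * BV + C2 * U * U)) / 2)"
  define c4 where "c4 = (c3 + (\<kappa> * 2 * LH * U * U * (mMi * (BV/2 + BJ * \<Lambda>1))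
         + \<kappa> * LG * U * mK0 * (2 * C2 * U * (mMi * (BV/2 + BJ * \<Lambda>1)))
         + mK0 * C2 * (mMi * (BV/2 + BJ * \<Lambda>1)) * (mMi * (BV/2 + BJ * \<Lambda>1))
         + \<kappa> * 2 * C2 * U * (mMi * (LV * U / 2 + LJ * U * \<Lambda>3 + BJ * \<Lambda>d))
         + \<kappa> * C2 * (mMi * (BJ * \<Lambda>3 + BV/2)) * (mMi * (BJ * \<Lambda>3 + BV/2))) / 2)"
  have nonneg: "0 \<le> mMi" "0 \<le> mK0" "0 \<le> mJ0" "0 \<le> mJt0" "0 \<le> mn Lm" "0 \<le> cb" "0 \<le> A1"
    by (simp_all add: mMi_def mK0_def mJ0_def mJt0_def mn_nonneg cb_def A1_def)
  have Q0: "0 \<le> Q" unfolding Q_def using Dm0 C2(1) by simp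
  have LG0: "0 \<le> LG" unfolding LG_def using nonneg BJ by simp
  have pr1: "0 \<le> mK0 * Q * mMi * mJt0" using nonneg Q0 by (intro mult_nonneg_nonneg) auto
  have pr2: "0 \<le> mK0 * LG" using nonneg LG0 by (intro mult_nonneg_nonneg) auto
  have den: "1 \<le> 1 + 2 * (mK0 * Q * mMi * mJt0) + 2 * (mK0 * LG)" using pr1 pr2 by linarith
  have rho: "0 < \<rho>" "\<rho> \<le> 1" unfolding \<rho>_def using den by (simp_all add: divide_le_eq_1)
  have P0: "0 \<le> P" unfolding P_def using nonneg by simp
  have nonneg2: "0 \<le> Q" "0 \<le> LG" "0 < \<rho>" "\<rho> \<le> 1" "0 \<le> P"
    using Q0 LG0 rho P0 by simp_all
  have a0: "0 < a0" "a0 \<le> 1" "a0 * A1 \<le> 1/2"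
    using nonneg by (simp_all add: a0_def field_simps)
  define good where "good a \<longleftrightarrow> 0 < a \<and> a \<le> a0 \<and> dist (q1 a) qn < \<rho> \<and>
         p14 a = pn - (a / 4) *\<^sub>R ((\<gamma> ** matrix_inv M) *v (pn + p14 a))
                  + sqrt (a / 2) *\<^sub>R (\<sigma> *v Gn) + grad_xi \<xi> qn *v lam14 a
       \<and> transpose (grad_xi \<xi> qn) *v (matrix_inv M *v p14 a) = 0
       \<and> p12 a = p14 a - (a / 2) *\<^sub>R grad_V V qn + grad_xi \<xi> qn *v lam12 a
       \<and> q1 a = qn + a *\<^sub>R (matrix_inv M *v p12 a)
       \<and> \<xi> (q1 a) = z
       \<and> p34 a = p12 a - (a / 2) *\<^sub>R grad_V V (q1 a) + grad_xi \<xi> (q1 a) *v lam34 a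
       \<and> transpose (grad_xi \<xi> (q1 a)) *v (matrix_inv M *v p34 a) = 0" for a
  have ev: "\<forall>\<^sub>F a in at_right 0. good a"
  proof -
    have "\<forall>\<^sub>F a in at_right 0. dist (q1 a) qn < \<rho>" using tendstoD[OF branch nonneg2(3)] .
    moreover have "\<forall>\<^sub>F a in at_right 0. 0 < a \<and> a \<le> a0" by (rule ev_small[OF a0(1)])
    ultimately show ?thesis using scheme unfolding good_def by eventually_elim blast
  qed
  have pw: "norm (lam12 a - (a / 2) *\<^sub>R f_rgd M \<xi> V qn (p12 a)) \<le> c1 * a ^ 2
       \<and> norm (lam34 a - (a / 2) *\<^sub>R f_rgd M \<xi> V (q1 a) (p12 a)) \<le> c2 * a ^ 2
       \<and> norm (lam12 a + lam34 a - (a / 2) *\<^sub>R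
                   (f_rgd M \<xi> V qn (p12 a) + f_rgd M \<xi> V (q1 a) (p12 a))) \<le> c3 * a ^ 3
       \<and> norm (lam12 a + lam34 a - (a / 2) *\<^sub>R
                   (f_rgd M \<xi> V qn (p14 a) + f_rgd M \<xi> V (q1 a) (p34 a))) \<le> c4 * a ^ 3"
    if "good a" for a
  proof -
    have gd: "0 < a" "a \<le> a0" "dist (q1 a) qn < \<rho>"
      "p14 a = pn - (a / 4) *\<^sub>R (Lm *v (pn + p14 a)) + sqrt (a / 2) *\<^sub>R (\<sigma> *v Gn) + Jt qn *v lam14 a"
      "transpose (grad_xi \<xi> qn) *v (matrix_inv M *v p14 a) = 0"
      "p12 a = p14 a - (a / 2) *\<^sub>R gV qn + Jt qn *v lam12 a"
      "q1 a = qn + a *\<^sub>R (Mi *v p12 a)"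
      "\<xi> (q1 a) = z"
      "p34 a = p12 a - (a / 2) *\<^sub>R gV (q1 a) + Jt (q1 a) *v lam34 a"
      "transpose (grad_xi \<xi> (q1 a)) *v (matrix_inv M *v p34 a) = 0"
      using that unfolding good_def Lm_def Mi_def Jt_def gV_def by blast+
    have S2: "J qn *v (Mi *v p14 a) = 0" using gd(5) by (simp only: tJt' Mi_def[symmetric])
    have S7: "J (q1 a) *v (Mi *v p34 a) = 0" using gd(10) by (simp only: tJt' Mi_def[symmetric])
    define x1 where "x1 = q1 a"
    define u where "u = Mi *v p12 a"
    define d where "d = q1 a - qn"
    define nd where "nd = norm d"
    have du: "d = a *\<^sub>R u" using gd(7) by (simp add: d_def u_def)
    have ndu: "nd = a * norm u" using gd(1) by (simp add: nd_def du)
    have nd0: "0 \<le> nd" by (simp add: nd_def)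
    have ndr: "nd < \<rho>" using gd(3) by (simp add: nd_def d_def dist_norm)
    have x1K: "x1 \<in> K" using gd(3) rho(2) by (simp add: K_def x1_def dist_commute)
    have x1d: "x1 = qn + d" by (simp add: x1_def d_def)
    have K0: "\<And>v. Ki qn *v (G qn *v v) = v" "\<And>v. G qn *v (Ki qn *v v) = v"
      using Ginv[OF qn_on] by blast+
    have K1: "\<And>v. Ki x1 *v (G x1 *v v) = v" "\<And>v. G x1 *v (Ki x1 *v v) = v"
      using Ginv[OF gd(8)[folded x1_def]] by blast+
    have BJ0: "mn (J qn) \<le> BJ" "mn (J x1) \<le> BJ" "mn (Jt qn) \<le> BJ" "mn (Jt x1) \<le> BJ"
      using BJ(3)[OF Kc(3)] BJ(3)[OF x1K] by (simp_all add: JtJ mn_transpose)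
    have LJ0: "mn (J x1 - J qn) \<le> LJ * nd" "mn (Jt x1 - Jt qn) \<le> LJ * nd"
      using LJ[OF Kc(3) x1K] by (simp_all add: JtJ transpose_diff'[symmetric] mn_transpose nd_def d_def x1_def)
    have BV0: "norm (gV qn) \<le> BV" "norm (gV x1) \<le> BV" using BV(3)[OF Kc(3)] BV(3)[OF x1K] by simp_all
    have LV0: "norm (gV x1 - gV qn) \<le> LV * nd" using LV[OF Kc(3) x1K] by (simp add: nd_def d_def x1_def)
    have LGb: "\<And>v. norm (G x1 *v v - G qn *v v) \<le> LG * nd * norm v"
    proof -
      fix v
      show "norm (G x1 *v v - G qn *v v) \<le> LG * nd * norm v"
        using G_lip[of "G qn" "J qn" Mi "Jt qn" "G x1" "J x1" "Jt x1" BJ LJ nd v, OF Gact Gact BJ0(1) BJ0(4) LJ0 BJ(1) BJ(2) nd0]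
        by (simp add: LG_def mMi_def)
    qed
    have sm1: "mK0 * LG * \<rho> \<le> 1/2" and sm2: "mK0 * Q * mMi * mJt0 * \<rho> \<le> 1/2"
    proof -
      define D where "D = 1 + 2 * (mK0 * Q * mMi * mJt0) + 2 * (mK0 * LG)"
      have D: "1 \<le> D" using den by (simp add: D_def)
      have "mK0 * LG * \<rho> = (mK0 * LG) / D" by (simp add: \<rho>_def D_def)
      also have "\<dots> \<le> 1/2" using D pr1 by (simp add: divide_simps D_def)
      finally show "mK0 * LG * \<rho> \<le> 1/2" .
      have "mK0 * Q * mMi * mJt0 * \<rho> = (mK0 * Q * mMi * mJt0) / D" by (simp add: \<rho>_def D_def)
      also have "\<dots> \<le> 1/2" using D pr2 by (simp add: divide_simps D_def)
      finally show "mK0 * Q * mMi * mJt0 * \<rho> \<le> 1/2" .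
    qed
    have kap: "\<And>v. norm (Ki x1 *v v) \<le> \<kappa> * norm v"
    proof -
      fix v
      have "mn (Ki qn) * (LG * nd) \<le> 1/2"
      proof -
        have "mK0 * (LG * nd) \<le> mK0 * (LG * \<rho>)" using nonneg LG0 ndr by (intro mult_left_mono) auto
        then show ?thesis using sm1 by (simp add: mK0_def mult_ac)
      qed
      then show "norm (Ki x1 *v v) \<le> \<kappa> * norm v"
        using core_K1[of "Ki qn" "G qn" "G x1" "Ki x1" LG nd v, OF K0(1) K1(2) LGb] by (simp add: \<kappa>_def mK0_def)
    qed
    have a1: "a \<le> 1" using gd(2) a0(2) by simp
    have p14b: "norm (p14 a) \<le> P"
    proof -
      have c: "norm (sqrt (a/2) *\<^sub>R (\<sigma> *v Gn)) \<le> cb"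
      proof -
        have "sqrt (a/2) \<le> 1" using a1 gd(1) by simp
        then show ?thesis using gd(1) by (simp add: cb_def mult_left_le_one_le)
      qed
      have sm: "a * (mn Lm / 4 + mn (Jt qn) * mn (Ki qn) * (mn (J qn) * mn Mi) * mn Lm / 4) \<le> 1/2"
      proof -
        have "a * A1 \<le> a0 * A1" using gd(2) nonneg by (intro mult_right_mono) auto
        then show ?thesis using a0(3) by (simp add: A1_def mJt0_def mK0_def mJ0_def mMi_def)
      qed
      show ?thesis
        using core_p14[OF gd(4) S2 Gact K0(1) c _ a1 sm] gd(1)
        by (simp add: P_def mJt0_def mK0_def mJ0_def mMi_def)
    qed
    have D1u: "G qn *v lam12 a = J qn *v u + (a/2) *\<^sub>R (J qn *v (Mi *v gV qn))"
      using D1[OF gd(6) S2 Gact] by (simp add: u_def)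
    have D2u: "G x1 *v lam34 a = - (J x1 *v u) + (a/2) *\<^sub>R (J x1 *v (Mi *v gV x1))"
      using D2[OF gd(9) S7 Gact] by (simp add: u_def x1_def)
    have Dls: "Dl [d] \<xi> y = a *\<^sub>R (J y *v u)" "Dl [d, d] \<xi> y = (a^2) *\<^sub>R H y u u" for y
      by (simp_all only: du Dl_1_scale[OF xi_smooth] Dl_2_scale[OF xi_smooth] Jdl Hdl)
    have Ju: "norm (J qn *v u) \<le> Q * norm u * nd"
    proof -
      have T: "norm (Dl (replicate 0 d) \<xi> (qn + d) - (\<Sum>j<2. (1 / fact j) *\<^sub>R Dl (replicate (0 + j) d) \<xi> qn))
          \<le> real DIM(real^'m) * (C2 * norm d ^ (0 + 2)) / fact 2"
        by (rule taylor_gen[OF xi_smooth _ Kc(2) Kc(3)]) (use x1K x1d C2(2) in auto)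
      have "norm (Dl [d] \<xi> qn) \<le> Dm * (C2 * nd^2) / 2"
        using T gd(8) qn_on by (simp add: numeral_2_eq_2 x1d[symmetric] x1_def Dm_def nd_def)
      then have "norm (a *\<^sub>R (J qn *v u)) \<le> Dm * (C2 * nd^2) / 2" by (simp only: Dls)
      then have "a * norm (J qn *v u) \<le> Q * nd * nd" using gd(1)
        by (simp add: Q_def power2_eq_square)
      also have "\<dots> = a * (Q * norm u * nd)" by (simp add: ndu)
      finally show ?thesis using gd(1) by simp
    qed
    have l12b: "norm (lam12 a) \<le> \<Lambda>b"
    proof -
      have Ju': "norm (J qn *v u) \<le> Q * norm u * \<rho>"
      proof -
        have "Q * norm u * nd \<le> Q * norm u * \<rho>" using Q0 ndr by (intro mult_left_mono) auto
        then show ?thesis using Ju by linarith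
      qed
      have sm: "mn (Ki qn) * Q * \<rho> * mn Mi * mn (Jt qn) \<le> 1/2"
        using sm2 by (simp add: mK0_def mMi_def mJt0_def mult_ac)
      show ?thesis
        using core_l12[OF gd(6) D1u u_def K0(1) Ju' p14b BV0(1) _ a1 Q0 _ sm] gd(1) rho(1)
        by (simp add: \<Lambda>b_def mK0_def mMi_def)
    qed
    have uU: "norm u \<le> U"
    proof -
      have "norm (p12 a) \<le> norm (p14 a) + norm ((a/2) *\<^sub>R gV qn) + norm (Jt qn *v lam12 a)"
        unfolding gd(6) using norm_triangle_ineq[of "p14 a - (a/2) *\<^sub>R gV qn" "Jt qn *v lam12 a"]
          norm_triangle_ineq4[of "p14 a" "(a/2) *\<^sub>R gV qn"] by linarith
      moreover have "norm ((a/2) *\<^sub>R gV qn) \<le> BV"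
      proof -
        have "norm ((a/2) *\<^sub>R gV qn) = (a/2) * norm (gV qn)" using gd(1) by simp
        also have "\<dots> \<le> 1 * norm (gV qn)" using gd(1) a1 by (intro mult_right_mono) auto
        finally show ?thesis using BV0(1) by simp
      qed
      moreover have "norm (Jt qn *v lam12 a) \<le> mJt0 * \<Lambda>b"
        using mn_mv[of "Jt qn" "lam12 a"] mult_left_mono[OF l12b nonneg(4)] by (simp add: mJt0_def)
      ultimately have "norm (p12 a) \<le> P + BV + mJt0 * \<Lambda>b" using p14b by linarith
      then have "mMi * norm (p12 a) \<le> U" unfolding U_def by (rule mult_left_mono[OF _ nonneg(1)])
      then show ?thesis using mn_mv[of Mi "p12 a"] by (simp add: u_def mMi_def)
    qed
    have U0: "0 \<le> U" using uU norm_ge_zero order_trans by blast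
    have ndU: "nd \<le> U * a" using uU gd(1) by (simp add: ndu mult_right_mono mult.commute)
    define A0 where "A0 = Dl [d] \<xi> qn"
    define B0 where "B0 = Dl [d, d] \<xi> qn"
    define A1' where "A1' = Dl [d] \<xi> x1"
    define B1 where "B1 = Dl [d, d] \<xi> x1"
    define X3 where "X3 = Dl [d, d, d] \<xi> qn"
    have x1K': "qn + d \<in> K" using x1K x1d by simp
    have C3': "\<forall>y\<in>K. \<forall>ws. length ws = k + n \<longrightarrow> norm (Dl ws \<xi> y) \<le> C3 * prod_list (map norm ws)" if "k + n = 3" for k n
      using C3(2) that by simp
    have C4': "\<forall>y\<in>K. \<forall>ws. length ws = k + n \<longrightarrow> norm (Dl ws \<xi> y) \<le> C4 * prod_list (map norm ws)" if "k + n = 4" for k n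
      using C4(2) that by simp
    have T3: "norm (\<xi> x1 - (\<xi> qn + A0 + (1/2) *\<^sub>R B0)) \<le> Dm * (C3 * nd^3) / 6"
      using taylor_gen[OF xi_smooth _ Kc(2) Kc(3) x1K' C3'[of 0 3]]
      by (simp add: eval_nat_numeral A0_def B0_def x1d Dm_def nd_def del: Dl.simps(2))
    have G12: "norm (A1' - (A0 + B0)) \<le> Dm * (C3 * nd^3) / 2"
      using taylor_gen[OF xi_smooth _ Kc(2) Kc(3) x1K' C3'[of 1 2]]
      by (simp add: eval_nat_numeral A0_def B0_def A1'_def x1d Dm_def nd_def del: Dl.simps(2))
    have G21: "norm (B1 - B0) \<le> Dm * (C3 * nd^3)"
      using taylor_gen[OF xi_smooth _ Kc(2) Kc(3) x1K' C3'[of 2 1]]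
      by (simp add: eval_nat_numeral B0_def B1_def x1d Dm_def nd_def del: Dl.simps(2))
    have G13: "norm (A1' - (A0 + B0 + (1/2) *\<^sub>R X3)) \<le> Dm * (C4 * nd^4) / 6"
      using taylor_gen[OF xi_smooth _ Kc(2) Kc(3) x1K' C4'[of 1 3]]
      by (simp add: eval_nat_numeral A0_def B0_def A1'_def X3_def x1d Dm_def nd_def del: Dl.simps(2))
    have G22: "norm (B1 - (B0 + X3)) \<le> Dm * (C4 * nd^4) / 2"
      using taylor_gen[OF xi_smooth _ Kc(2) Kc(3) x1K' C4'[of 2 2]]
      by (simp add: eval_nat_numeral B0_def B1_def X3_def x1d Dm_def nd_def del: Dl.simps(2))
    define r1 where "r1 = J qn *v u + (a/2) *\<^sub>R H qn u u"
    define r2 where "r2 = - (J x1 *v u) + (a/2) *\<^sub>R H x1 u u"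
    have er1: "A0 + (1/2) *\<^sub>R B0 = a *\<^sub>R r1"
    proof -
      have "A0 + (1/2) *\<^sub>R B0 = a *\<^sub>R (J qn *v u) + (1/2) *\<^sub>R ((a^2) *\<^sub>R H qn u u)"
        by (simp only: A0_def B0_def Dls)
      then show ?thesis by (simp add: r1_def algebra_simps power2_eq_square)
    qed
    have er2: "- A1' + (1/2) *\<^sub>R B1 = a *\<^sub>R r2"
    proof -
      have "- A1' + (1/2) *\<^sub>R B1 = - (a *\<^sub>R (J x1 *v u)) + (1/2) *\<^sub>R ((a^2) *\<^sub>R H x1 u u)"
        by (simp only: A1'_def B1_def Dls)
      then show ?thesis by (simp add: r2_def algebra_simps power2_eq_square)
    qed
    have nd3: "nd^3 \<le> (U * a)^3" by (rule power_mono[OF ndU nd0])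
    have nd4: "nd^4 \<le> (U * a)^4" by (rule power_mono[OF ndU nd0])
    have DC3: "0 \<le> Dm * C3" "0 \<le> Dm * C4" using Dm0 C3(1) C4(1) by simp_all
    have t3: "norm (A0 + (1/2) *\<^sub>R B0) \<le> Dm * (C3 * nd^3) / 6"
    proof -
      have "\<xi> x1 - (\<xi> qn + A0 + (1/2) *\<^sub>R B0) = - (A0 + (1/2) *\<^sub>R B0)"
        using gd(8) qn_on by (simp add: x1_def)
      then show ?thesis using T3 by (simp only: norm_minus_cancel)
    qed
    have TA: "norm r1 \<le> R1 * a^2"
    proof (rule div_a[OF gd(1)])
      have "a * norm r1 = norm (A0 + (1/2) *\<^sub>R B0)" using er1 gd(1) by simp
      also have "\<dots> \<le> Dm * C3 * nd^3 / 6" using t3 by (simp add: mult_ac)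
      also have "\<dots> \<le> Dm * C3 * (U * a)^3 / 6" using nd3 DC3 by (simp add: mult_left_mono divide_right_mono)
      also have "\<dots> = R1 * a ^ Suc 2" by (simp add: R1_def power_mult_distrib)
      finally show "a * norm r1 \<le> R1 * a ^ Suc 2" .
    qed
    have TB: "norm r2 \<le> R2 * a^2"
    proof (rule div_a[OF gd(1)])
      have "a * norm r2 = norm (- A1' + (1/2) *\<^sub>R B1)" using er2 gd(1) by simp
      also have "\<dots> \<le> Dm * (C3 * nd^3) / 6 + Dm * (C3 * nd^3) / 2 + Dm * (C3 * nd^3) / 2"
        by (rule vec_comb[OF t3 G12 G21])
      also have "\<dots> = (Dm * C3 * 7 / 6) * nd^3" by (simp add: algebra_simps)
      also have "\<dots> \<le> (Dm * C3 * 7 / 6) * (U * a)^3" using nd3 DC3 by (intro mult_left_mono) auto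
      also have "\<dots> = R2 * a ^ Suc 2" by (simp add: R2_def power_mult_distrib)
      finally show "a * norm r2 \<le> R2 * a ^ Suc 2" .
    qed
    have TC: "norm (r1 + r2) \<le> R3 * a^3"
    proof (rule div_a[OF gd(1)])
      have "a * norm (r1 + r2) = norm ((A0 + (1/2) *\<^sub>R B0) + (- A1' + (1/2) *\<^sub>R B1))"
        using er1 er2 gd(1) by (simp add: scaleR_right_distrib[symmetric])
      also have "\<dots> \<le> Dm * (C4 * nd^4) / 6 + Dm * (C4 * nd^4) / 2 / 2"
        by (rule vec_comb2[OF G13 G22])
      also have "\<dots> = (Dm * C4 * 5 / 12) * nd^4" by (simp add: algebra_simps)
      also have "\<dots> \<le> (Dm * C4 * 5 / 12) * (U * a)^4" using nd4 DC3 by (intro mult_left_mono) auto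
      also have "\<dots> = R3 * a ^ Suc 3" by (simp add: R3_def power_mult_distrib)
      finally show "a * norm (r1 + r2) \<le> R3 * a ^ Suc 3" .
    qed
    have kap0: "0 \<le> \<kappa>" using nonneg by (simp add: \<kappa>_def)
    have R0: "0 \<le> R1" "0 \<le> R2" "0 \<le> R3" using DC3 U0 by (simp_all add: R1_def R2_def R3_def)
    have c0: "0 \<le> c1" "0 \<le> c2" using R0 nonneg kap0 by (simp_all add: c1_def c2_def)
    have L0: "0 \<le> \<Lambda>1" "0 \<le> \<Lambda>3" "0 \<le> \<Lambda>d"
      using nonneg kap0 R0 U0 BJ BV C2(1) LH(1) LG0 Q0 c0
      by (simp_all add: \<Lambda>1_def \<Lambda>3_def \<Lambda>d_def)
    have TA': "norm (J qn *v u + (a/2) *\<^sub>R H qn u u) \<le> R1 * a^2" using TA by (simp add: r1_def)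
    have TB': "norm (- (J x1 *v u) + (a/2) *\<^sub>R H x1 u u) \<le> R2 * a^2" using TB by (simp add: r2_def)
    have TC': "norm ((J qn *v u + (a/2) *\<^sub>R H qn u u) + (- (J x1 *v u) + (a/2) *\<^sub>R H x1 u u)) \<le> R3 * a^3"
      using TC by (simp add: r1_def r2_def)
    have a00: "0 \<le> a" using gd(1) by simp
    note c123 = core_123[where HA="H qn" and HB="H x1" and u=u, OF D1u D2u K0(1) K0(2) K1(1) kap LGb nd0 ndU a00 kap0 LG0 U0 TA' TB' TC']
    have LHb0: "norm (H x1 v w - H qn v w) \<le> LH * nd * norm v * norm w" for v w
      using LHb[OF Kc(3) x1K, of v w] by (simp add: nd_def d_def x1_def)
    note clam = core_lam[where HA="H qn" and HB="H x1" and u=u, OF D1u D2u K0(1) K0(2) K1(1) kap LGb nd0 ndU gd(1) a1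
      kap0 LG0 U0 BJ(1) BV(1) C2(1) BJ(2) BV(2) LH(1) Q0 uU Ju BJ0(1) BJ0(2) BV0(1) BV0(2) LJ0(1) LV0
      Hb[OF x1K] Hb[OF Kc(3)] LHb0 c123(1) c123(2) TB']
    have L12: "norm (lam12 a) \<le> \<Lambda>1 * a" using clam(1) by (simp add: \<Lambda>1_def mK0_def mMi_def)
    have L34: "norm (lam34 a) \<le> \<Lambda>3 * a" using clam(2) by (simp add: \<Lambda>3_def mMi_def)
    have Ld: "norm (lam34 a - lam12 a) \<le> \<Lambda>d * a^2"
      using clam(3) by (simp add: \<Lambda>d_def c1_def c2_def mK0_def mMi_def)
    note c4 = core_4[where HA="H qn" and HB="H x1" and u=u, OF gd(6) gd(9)[folded x1_def] u_def K0(1) K0(2) K1(1) kap LGb nd0 ndU gd(1)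
      kap0 LG0 U0 BJ(1) BV(1) C2(1) BJ(2) BV(2) LH(1) L0 uU BJ0(3) BJ0(4) BV0(1) BV0(2) LJ0(2) LV0
      Hb[OF x1K] Hb[OF Kc(3)] LHb0 Hlin(1,2) Hlin L12 L34 Ld c123(3)]
    have fu: "Mi *v p12 a = u" by (simp add: u_def)
    show ?thesis
    proof (intro conjI)
      show "norm (lam12 a - (a / 2) *\<^sub>R f_rgd M \<xi> V qn (p12 a)) \<le> c1 * a ^ 2"
        using c123(1) by (simp add: frgd fu c1_def mK0_def)
      show "norm (lam34 a - (a / 2) *\<^sub>R f_rgd M \<xi> V (q1 a) (p12 a)) \<le> c2 * a ^ 2"
        using c123(2) by (simp add: frgd fu c2_def x1_def)
      show "norm (lam12 a + lam34 a - (a / 2) *\<^sub>R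
                   (f_rgd M \<xi> V qn (p12 a) + f_rgd M \<xi> V (q1 a) (p12 a))) \<le> c3 * a ^ 3"
        using c123(3) by (simp add: frgd fu c3_def x1_def mK0_def)
      show "norm (lam12 a + lam34 a - (a / 2) *\<^sub>R
                   (f_rgd M \<xi> V qn (p14 a) + f_rgd M \<xi> V (q1 a) (p34 a))) \<le> c4 * a ^ 3"
        using c4 by (simp add: frgd c4_def x1_def mK0_def mMi_def c3_def)
    qed
  qed
  show ?thesis
  proof (intro conjI exI)
    show "\<forall>\<^sub>F dt in at_right 0. norm (lam12 dt - (dt / 2) *\<^sub>R f_rgd M \<xi> V qn (p12 dt)) \<le> c1 * dt ^ 2"
      using ev by eventually_elim (use pw in blast)
    show "\<forall>\<^sub>F dt in at_right 0. norm (lam34 dt - (dt / 2) *\<^sub>R f_rgd M \<xi> V (q1 dt) (p12 dt)) \<le> c2 * dt ^ 2"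
      using ev by eventually_elim (use pw in blast)
    show "\<forall>\<^sub>F dt in at_right 0. norm (lam12 dt + lam34 dt - (dt / 2) *\<^sub>R
                   (f_rgd M \<xi> V qn (p12 dt) + f_rgd M \<xi> V (q1 dt) (p12 dt))) \<le> c3 * dt ^ 3"
      using ev by eventually_elim (use pw in blast)
    show "\<forall>\<^sub>F dt in at_right 0. norm (lam12 dt + lam34 dt - (dt / 2) *\<^sub>R
                   (f_rgd M \<xi> V qn (p14 dt) + f_rgd M \<xi> V (q1 dt) (p34 dt))) \<le> c4 * dt ^ 3"
      using ev by eventually_elim (use pw in blast)
  qed
qed

end
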